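(* Let $U=\{(x_1,x_2,x_3,y_1,y_2,y_3)\in\mathbb{R}^6 : X\neq 0,\ Y\neq 0,\ Z\neq 0\}$. For every choice of polynomials $P_1,\dots,P_8\in\mathbb{Q}[x_1,x_2,x_3,y_1,y_2,y_3]$ and every variable $\xi\in\{x_1,x_2,x_3,y_1,y_2,y_3\}$ there exist polynomials $Q_1,\dots,Q_8\in\mathbb{Q}[x_1,x_2,x_3,y_1,y_2,y_3]$ with $Q_1=0$ such that $\frac{\partial}{\partial\xi}F_{Q_1,\dots,Q_8}=F_{P_1,\dots,P_8}$ on $U$. In particular, for any multi-indices $\lambda,\mu\in\mathbb{N}_0^3$, a six-fold antiderivative of $\frac{x_1^{\lambda_1}x_2^{\lambda_2}x_3^{\lambda_3}y_1^{\mu_1}y_2^{\mu_2}y_3^{\mu_3}}{R}$ with respect to $y_1,y_2,y_3,x_1,x_2,x_3$ can be chosen of the form $F_{Q_1,\dots,Q_8}$ with rational polynomials $Q_i$ (no stand-alone polynomial term is needed).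
   Context: For $(x_1,x_2,x_3,y_1,y_2,y_3)\in\mathbb{R}^6$ set $X=x_1-y_1$, $Y=x_2-y_2$, $Z=x_3-y_3$, $R=\sqrt{X^2+Y^2+Z^2}$. For polynomials $P_1,\dots,P_8$ define on $U$ $$F_{P_1,\dots,P_8}=P_1\frac1R+P_2R+P_3\operatorname{atanh}\!\Big(\frac XR\Big)+P_4\operatorname{atanh}\!\Big(\frac YR\Big)+P_5\operatorname{atanh}\!\Big(\frac ZR\Big)+P_6\arctan\!\Big(\frac XR\frac YZ\Big)+P_7\arctan\!\Big(\frac XR\frac ZY\Big)+P_8\arctan\!\Big(\frac YR\frac ZX\Big).$$ *)

theory Defs
  imports "HOL-Analysis.Analysis"
begin

text \<open>Points of R^6 are vectors p :: real^6 with p$1,p$2,p$3 = x1,x2,x3 and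
  p$4,p$5,p$6 = y1,y2,y3.\<close>

inductive_set qpoly :: "(real^6 \<Rightarrow> real) set" where
  qpoly_const: "(\<lambda>_. of_rat c) \<in> qpoly"
| qpoly_var: "(\<lambda>p. p $ i) \<in> qpoly"
| qpoly_add: "f \<in> qpoly \<Longrightarrow> g \<in> qpoly \<Longrightarrow> (\<lambda>p. f p + g p) \<in> qpoly"
| qpoly_mult: "f \<in> qpoly \<Longrightarrow> g \<in> qpoly \<Longrightarrow> (\<lambda>p. f p * g p) \<in> qpoly"

definition Xc :: "real^6 \<Rightarrow> real" where "Xc p = p$1 - p$4"
definition Yc :: "real^6 \<Rightarrow> real" where "Yc p = p$2 - p$5"
definition Zc :: "real^6 \<Rightarrow> real" where "Zc p = p$3 - p$6"
definition Rc :: "real^6 \<Rightarrow> real" where "Rc p = sqrt (Xc p ^ 2 + Yc p ^ 2 + Zc p ^ 2)"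

definition U6 :: "(real^6) set" where
  "U6 = {p. Xc p \<noteq> 0 \<and> Yc p \<noteq> 0 \<and> Zc p \<noteq> 0}"

definition FF :: "(real^6 \<Rightarrow> real) \<Rightarrow> (real^6 \<Rightarrow> real) \<Rightarrow> (real^6 \<Rightarrow> real) \<Rightarrow> (real^6 \<Rightarrow> real)
   \<Rightarrow> (real^6 \<Rightarrow> real) \<Rightarrow> (real^6 \<Rightarrow> real) \<Rightarrow> (real^6 \<Rightarrow> real) \<Rightarrow> (real^6 \<Rightarrow> real)
   \<Rightarrow> real^6 \<Rightarrow> real" where
  "FF P1 P2 P3 P4 P5 P6 P7 P8 p =
     P1 p * (1 / Rc p) + P2 p * Rc p
   + P3 p * artanh (Xc p / Rc p) + P4 p * artanh (Yc p / Rc p) + P5 p * artanh (Zc p / Rc p)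
   + P6 p * arctan (Xc p / Rc p * (Yc p / Zc p))
   + P7 p * arctan (Xc p / Rc p * (Zc p / Yc p))
   + P8 p * arctan (Yc p / Rc p * (Zc p / Xc p))"

definition upd :: "real^6 \<Rightarrow> 6 \<Rightarrow> real \<Rightarrow> real^6" where
  "upd p i t = (\<chi> j. if j = i then t else p $ j)"

definition has_partial :: "(real^6 \<Rightarrow> real) \<Rightarrow> 6 \<Rightarrow> (real^6 \<Rightarrow> real) \<Rightarrow> (real^6) set \<Rightarrow> bool" where
  "has_partial F i G S \<longleftrightarrow>
     (\<forall>p\<in>S. ((\<lambda>t. F (upd p i t)) has_real_derivative G p) (at (p $ i)))"

end

theory Submission
  imports Defs
begin

definition r3 :: "real\<Rightarrow>real\<Rightarrow>real\<Rightarrow>real" where "r3 x y z = sqrt (x^2+y^2+z^2)"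

lemma r3_pos: "y \<noteq> 0 \<Longrightarrow> r3 x y z > 0" unfolding r3_def
  by (simp add: add_nonneg_pos add_pos_nonneg)
lemma r3_sq: "(r3 x y z)^2 = x^2+y^2+z^2" unfolding r3_def by simp

lemma dR: assumes "y \<noteq> 0" shows "((\<lambda>t. r3 t y z) has_real_derivative x / r3 x y z) (at x)"
proof -
  have pos: "0 < x^2+y^2+z^2" using assms by (simp add: add_nonneg_pos add_pos_nonneg)
  have "((\<lambda>t. t^2+y^2+z^2) has_real_derivative 2*x) (at x)"
    by (auto intro!: derivative_eq_intros)
  from DERIV_chain2[OF DERIV_real_sqrt[OF pos] this]
  show ?thesis unfolding r3_def by (rule DERIV_cong) (simp add: field_simps)
qed

lemma dQ: assumes "y \<noteq> 0" shows "((\<lambda>t. t / r3 t y z) has_real_derivative (y^2+z^2) / (r3 x y z)^3) (at x)"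
proof -
  have R: "r3 x y z > 0" "(r3 x y z)^2 = x^2+y^2+z^2" using r3_pos[OF assms] r3_sq by auto
  have "((\<lambda>t. t / r3 t y z) has_real_derivative (1 * r3 x y z - x * (x / r3 x y z)) / (r3 x y z * r3 x y z)) (at x)"
    by (rule DERIV_divide[OF DERIV_ident dR[OF assms]]) (use R in simp)
  then show ?thesis apply (rule DERIV_cong) using R(1) apply (simp add: field_simps)
    using R(2) by algebra
qed

lemma dQc: assumes "y \<noteq> 0" shows "((\<lambda>t. c / r3 t y z) has_real_derivative - c * x / (r3 x y z)^3) (at x)"
proof -
  have R: "r3 x y z > 0" "(r3 x y z)^2 = x^2+y^2+z^2" using r3_pos[OF assms] r3_sq by auto
  have "((\<lambda>t. c / r3 t y z) has_real_derivative (0 * r3 x y z - c * (x / r3 x y z)) / (r3 x y z * r3 x y z)) (at x)"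
    by (rule DERIV_divide[OF DERIV_const dR[OF assms]]) (use R in simp)
  then show ?thesis apply (rule DERIV_cong) using R(1) by (simp add: field_simps power3_eq_cube)
qed

lemma alg3: fixes R Q :: real assumes "R>0" "Q>0" shows "1/(Q/R^2) * (Q/R^3) = 1/R"
  using assms by (simp add: field_simps power2_eq_square power3_eq_cube)
lemma alg4: fixes R P c x :: real assumes "R>0" "P>0" shows "1/(P/R^2) * (- c * x / R^3) = - (x*c)/(R*P)"
  using assms by (simp add: field_simps power2_eq_square power3_eq_cube)
lemma alg7: fixes R z P Q y :: real assumes "R>0" "y\<noteq>0" "P>0" "Q>0"
  shows "inverse (P*Q/(R^2*y^2)) * (Q/R^3*(z/y)) = y*z/(R*P)"
  using assms by (simp add: field_simps power2_eq_square power3_eq_cube)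

lemma dA3: assumes "y \<noteq> 0" shows "((\<lambda>t. artanh (t / r3 t y z)) has_real_derivative 1 / r3 x y z) (at x)"
proof -
  have R: "r3 x y z > 0" "(r3 x y z)^2 = x^2+y^2+z^2" using r3_pos[OF assms] r3_sq by auto
  have p: "y^2+z^2 > 0" using assms by (simp add: add_pos_nonneg)
  have e: "1 - (x / r3 x y z)^2 = (y^2+z^2)/(r3 x y z)^2"
    using R(1) apply (simp add: field_simps) using R(2) by algebra
  have lt: "\<bar>x / r3 x y z\<bar> < 1"
  proof -
    have "(x / r3 x y z)^2 < 1" using e p R by (smt (verit) divide_pos_pos zero_less_power)
    then show ?thesis by (simp add: abs_square_less_1)
  qed
  from DERIV_chain2[OF artanh_real_has_field_derivative[OF lt] dQ[OF assms]]
  show ?thesis apply (rule DERIV_cong) unfolding e using R(1) p by (intro alg3) auto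
qed

lemma dA4: assumes "y \<noteq> 0" "z \<noteq> 0"
  shows "((\<lambda>t. artanh (y / r3 t y z)) has_real_derivative - (x*y) / (r3 x y z * (x^2+z^2))) (at x)"
proof -
  have R: "r3 x y z > 0" "(r3 x y z)^2 = x^2+y^2+z^2" using r3_pos[OF assms(1)] r3_sq by auto
  have p: "x^2+z^2 > 0" using assms by (simp add: add_nonneg_pos)
  have e: "1 - (y / r3 x y z)^2 = (x^2+z^2)/(r3 x y z)^2"
    using R(1) apply (simp add: field_simps) using R(2) by algebra
  have lt: "\<bar>y / r3 x y z\<bar> < 1"
  proof -
    have "(y / r3 x y z)^2 < 1" using e p R by (smt (verit) divide_pos_pos zero_less_power)
    then show ?thesis by (simp add: abs_square_less_1)
  qed
  from DERIV_chain2[OF artanh_real_has_field_derivative[OF lt] dQc[OF assms(1), of y]]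
  show ?thesis apply (rule DERIV_cong) unfolding e using R(1) p by (intro alg4) auto
qed

lemma dA5: assumes "y \<noteq> 0" "z \<noteq> 0"
  shows "((\<lambda>t. artanh (z / r3 t y z)) has_real_derivative - (x*z) / (r3 x y z * (x^2+y^2))) (at x)"
proof -
  have R: "r3 x y z > 0" "(r3 x y z)^2 = x^2+y^2+z^2" using r3_pos[OF assms(1)] r3_sq by auto
  have p: "x^2+y^2 > 0" using assms by (simp add: add_nonneg_pos)
  have e: "1 - (z / r3 x y z)^2 = (x^2+y^2)/(r3 x y z)^2"
    using R(1) apply (simp add: field_simps) using R(2) by algebra
  have lt: "\<bar>z / r3 x y z\<bar> < 1"
  proof -
    have "(z / r3 x y z)^2 < 1" using e p R by (smt (verit) divide_pos_pos zero_less_power)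
    then show ?thesis by (simp add: abs_square_less_1)
  qed
  from DERIV_chain2[OF artanh_real_has_field_derivative[OF lt] dQc[OF assms(1), of z]]
  show ?thesis apply (rule DERIV_cong) unfolding e using R(1) p by (intro alg4) auto
qed

lemma alg6: fixes R z P Q y :: real assumes "R>0" "z\<noteq>0" "P>0" "Q>0"
  shows "inverse (P*Q/(R^2*z^2)) * (Q/R^3*(y/z)) = y*z/(R*P)"
  using assms by (simp add: field_simps power2_eq_square power3_eq_cube)
lemma alg8: fixes R x y z P Q :: real assumes "R>0" "x\<noteq>0" "P>0" "Q>0" "R^2 + x^2 = P + Q"
  shows "inverse (P*Q/(R^2*x^2)) * (y / R * ((0 * x - z * 1) / (x * x)) + (- y * x / R^3) * (z / x))
     = - (y*z) / (R * Q) - (y*z) / (R * P)"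
  using assms(1-4) apply (simp add: field_simps) using assms(5) by algebra

lemma dT6: assumes "y \<noteq> 0" "z \<noteq> 0"
  shows "((\<lambda>t. arctan (t / r3 t y z * (y / z))) has_real_derivative (y*z) / (r3 x y z * (x^2+z^2))) (at x)"
proof -
  have R: "r3 x y z > 0" "(r3 x y z)^2 = x^2+y^2+z^2" using r3_pos[OF assms(1)] r3_sq by auto
  have p: "x^2+z^2 > 0" "y^2+z^2 > 0" using assms by (simp_all add: add_nonneg_pos)
  have e: "1 + (x / r3 x y z * (y / z))^2 = (x^2+z^2)*(y^2+z^2)/((r3 x y z)^2*z^2)"
    using R(1) assms apply (simp add: field_simps) using R(2) by algebra
  have d: "((\<lambda>t. t / r3 t y z * (y / z)) has_real_derivative (y^2+z^2) / (r3 x y z)^3 * (y/z)) (at x)"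
    by (rule DERIV_mult'[OF dQ[OF assms(1)] DERIV_const, THEN DERIV_cong]) simp
  from DERIV_chain2[OF DERIV_arctan d]
  show ?thesis apply (rule DERIV_cong) unfolding e using R(1) p assms by (intro alg6) auto
qed

lemma dT7: assumes "y \<noteq> 0" "z \<noteq> 0"
  shows "((\<lambda>t. arctan (t / r3 t y z * (z / y))) has_real_derivative (y*z) / (r3 x y z * (x^2+y^2))) (at x)"
proof -
  have R: "r3 x y z > 0" "(r3 x y z)^2 = x^2+y^2+z^2" using r3_pos[OF assms(1)] r3_sq by auto
  have p: "x^2+y^2 > 0" "y^2+z^2 > 0" using assms by (simp_all add: add_nonneg_pos)
  have e: "1 + (x / r3 x y z * (z / y))^2 = (x^2+y^2)*(y^2+z^2)/((r3 x y z)^2*y^2)"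
    using R(1) assms apply (simp add: field_simps) using R(2) by algebra
  have d: "((\<lambda>t. t / r3 t y z * (z / y)) has_real_derivative (y^2+z^2) / (r3 x y z)^3 * (z/y)) (at x)"
    by (rule DERIV_mult'[OF dQ[OF assms(1)] DERIV_const, THEN DERIV_cong]) simp
  from DERIV_chain2[OF DERIV_arctan d]
  show ?thesis apply (rule DERIV_cong) unfolding e using R(1) p assms by (intro alg7) auto
qed

lemma dT8: assumes "x \<noteq> 0" "y \<noteq> 0" "z \<noteq> 0"
  shows "((\<lambda>t. arctan (y / r3 t y z * (z / t))) has_real_derivative
      - (y*z) / (r3 x y z * (x^2+z^2)) - (y*z) / (r3 x y z * (x^2+y^2))) (at x)"
proof -
  have R: "r3 x y z > 0" "(r3 x y z)^2 = x^2+y^2+z^2" using r3_pos[OF assms(2)] r3_sq by auto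
  have p: "x^2+y^2 > 0" "x^2+z^2 > 0" using assms by (simp_all add: add_nonneg_pos)
  have e: "1 + (y / r3 x y z * (z / x))^2 = (x^2+y^2)*(x^2+z^2)/((r3 x y z)^2*x^2)"
    using R(1) assms apply (simp add: field_simps) using R(2) by algebra
  have dz: "((\<lambda>t. z / t) has_real_derivative (0 * x - z * 1) / (x * x)) (at x)"
    by (rule DERIV_divide[OF DERIV_const DERIV_ident]) (use assms in simp)
  have d: "((\<lambda>t. y / r3 t y z * (z / t)) has_real_derivative
      y / r3 x y z * ((0 * x - z * 1) / (x * x)) + (- y * x / (r3 x y z)^3) * (z / x)) (at x)"
    by (rule DERIV_mult'[OF dQc[OF assms(2)] dz])
  from DERIV_chain2[OF DERIV_arctan d]
  show ?thesis apply (rule DERIV_cong) unfolding e using R p assms by (intro alg8) auto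
qed



inductive_set qp3 :: "(real\<Rightarrow>real\<Rightarrow>real\<Rightarrow>real) set" where
  c3: "(\<lambda>_ _ _. of_rat c) \<in> qp3"
| vx: "(\<lambda>x y z. x) \<in> qp3"
| vy: "(\<lambda>x y z. y) \<in> qp3"
| vz: "(\<lambda>x y z. z) \<in> qp3"
| add3: "f \<in> qp3 \<Longrightarrow> g \<in> qp3 \<Longrightarrow> (\<lambda>x y z. f x y z + g x y z) \<in> qp3"
| mul3: "f \<in> qp3 \<Longrightarrow> g \<in> qp3 \<Longrightarrow> (\<lambda>x y z. f x y z * g x y z) \<in> qp3"

lemma zero3: "(\<lambda>_ _ _. 0) \<in> qp3" using c3[of 0] by simp
lemma rat3: "a \<in> \<rat> \<Longrightarrow> (\<lambda>_ _ _. a) \<in> qp3" by (auto elim!: Rats_cases intro: c3)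
lemma pow3: "(\<lambda>x y z. x ^ m) \<in> qp3"
  by (induction m) (use c3[of 1] in \<open>auto intro: mul3 vx\<close>)

definition F3 where
  "F3 q1 q2 q3 q4 q5 q6 q7 q8 x y z =
     q1 x y z * (1 / r3 x y z) + q2 x y z * r3 x y z
   + q3 x y z * artanh (x / r3 x y z) + q4 x y z * artanh (y / r3 x y z) + q5 x y z * artanh (z / r3 x y z)
   + q6 x y z * arctan (x / r3 x y z * (y / z))
   + q7 x y z * arctan (x / r3 x y z * (z / y))
   + q8 x y z * arctan (y / r3 x y z * (z / x))"

definition SSw where
  "SSw q2 q3 q4 q5 q6 q7 q8 g \<longleftrightarrow> q2 \<in> qp3 \<and> q3 \<in> qp3 \<and> q4 \<in> qp3 \<and> q5 \<in> qp3 \<and> q6 \<in> qp3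
      \<and> q7 \<in> qp3 \<and> q8 \<in> qp3 \<and> (\<forall>x y z. x \<noteq> 0 \<longrightarrow> y \<noteq> 0 \<longrightarrow> z \<noteq> 0 \<longrightarrow>
        ((\<lambda>t. F3 (\<lambda>_ _ _. 0) q2 q3 q4 q5 q6 q7 q8 t y z) has_real_derivative g x y z) (at x))"

definition SS :: "(real\<Rightarrow>real\<Rightarrow>real\<Rightarrow>real) set" where
  "SS = {g. \<exists>q2 q3 q4 q5 q6 q7 q8. SSw q2 q3 q4 q5 q6 q7 q8 g}"

lemma SS_I: "SSw q2 q3 q4 q5 q6 q7 q8 g \<Longrightarrow> g \<in> SS" unfolding SS_def by (intro CollectI exI)
lemma SS_E: "g \<in> SS \<Longrightarrow> (\<And>q2 q3 q4 q5 q6 q7 q8. SSw q2 q3 q4 q5 q6 q7 q8 g \<Longrightarrow> P) \<Longrightarrow> P"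
  unfolding SS_def by auto

lemma SS_add: assumes "f \<in> SS" "g \<in> SS" shows "(\<lambda>x y z. f x y z + g x y z) \<in> SS"
proof -
  from assms(1) obtain a2 a3 a4 a5 a6 a7 a8 where A: "SSw a2 a3 a4 a5 a6 a7 a8 f" by (rule SS_E)
  from assms(2) obtain b2 b3 b4 b5 b6 b7 b8 where B: "SSw b2 b3 b4 b5 b6 b7 b8 g" by (rule SS_E)
  let ?s = "\<lambda>u v. (\<lambda>x y z. u x y z + v x y z) :: real\<Rightarrow>real\<Rightarrow>real\<Rightarrow>real"
  have e: "F3 (\<lambda>_ _ _. 0) (?s a2 b2) (?s a3 b3) (?s a4 b4) (?s a5 b5) (?s a6 b6) (?s a7 b7) (?s a8 b8) t y z
     = F3 (\<lambda>_ _ _. 0) a2 a3 a4 a5 a6 a7 a8 t y z + F3 (\<lambda>_ _ _. 0) b2 b3 b4 b5 b6 b7 b8 t y z" for t y z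
    unfolding F3_def by (simp add: algebra_simps)
  have "SSw (?s a2 b2) (?s a3 b3) (?s a4 b4) (?s a5 b5) (?s a6 b6) (?s a7 b7) (?s a8 b8) (\<lambda>x y z. f x y z + g x y z)"
    using A B unfolding SSw_def e by (auto intro!: add3 DERIV_add)
  then show ?thesis by (rule SS_I)
qed

lemma SS_mulc: assumes "g \<in> SS" "h \<in> qp3" "\<And>x x' y z. h x y z = h x' y z"
  shows "(\<lambda>x y z. h x y z * g x y z) \<in> SS"
proof -
  from assms(1) obtain a2 a3 a4 a5 a6 a7 a8 where A: "SSw a2 a3 a4 a5 a6 a7 a8 g" by (rule SS_E)
  let ?s = "\<lambda>u. (\<lambda>x y z. h x y z * u x y z) :: real\<Rightarrow>real\<Rightarrow>real\<Rightarrow>real"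
  have e: "(\<lambda>t. F3 (\<lambda>_ _ _. 0) (?s a2) (?s a3) (?s a4) (?s a5) (?s a6) (?s a7) (?s a8) t y z)
     = (\<lambda>t. h x y z * F3 (\<lambda>_ _ _. 0) a2 a3 a4 a5 a6 a7 a8 t y z)" for x y z
  proof (rule ext)
    fix t
    have "h t y z = h x y z" by (rule assms(3))
    then show "F3 (\<lambda>_ _ _. 0) (?s a2) (?s a3) (?s a4) (?s a5) (?s a6) (?s a7) (?s a8) t y z
     = h x y z * F3 (\<lambda>_ _ _. 0) a2 a3 a4 a5 a6 a7 a8 t y z" unfolding F3_def by (simp add: algebra_simps)
  qed
  have "SSw (?s a2) (?s a3) (?s a4) (?s a5) (?s a6) (?s a7) (?s a8) (\<lambda>x y z. h x y z * g x y z)"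
    using A assms(2) unfolding SSw_def
  proof (intro conjI allI impI mul3; (elim conjE)?)
    fix x y z :: real assume "x \<noteq> 0" "y \<noteq> 0" "z \<noteq> 0" and
      D: "\<forall>x y z. x \<noteq> 0 \<longrightarrow> y \<noteq> 0 \<longrightarrow> z \<noteq> 0 \<longrightarrow>
        ((\<lambda>t. F3 (\<lambda>_ _ _. 0) a2 a3 a4 a5 a6 a7 a8 t y z) has_real_derivative g x y z) (at x)"
    show "((\<lambda>t. F3 (\<lambda>_ _ _. 0) (?s a2) (?s a3) (?s a4) (?s a5) (?s a6) (?s a7) (?s a8) t y z) has_real_derivative h x y z * g x y z) (at x)"
      unfolding e[of y z x] using D \<open>x \<noteq> 0\<close> \<open>y \<noteq> 0\<close> \<open>z \<noteq> 0\<close> by (auto intro!: DERIV_cmult)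
  qed auto
  then show ?thesis by (rule SS_I)
qed

lemma SS_cong: assumes "g \<in> SS" "\<And>x y z. x \<noteq> 0 \<Longrightarrow> y \<noteq> 0 \<Longrightarrow> z \<noteq> 0 \<Longrightarrow> g' x y z = g x y z"
  shows "g' \<in> SS"
proof -
  from assms(1) obtain a2 a3 a4 a5 a6 a7 a8 where A: "SSw a2 a3 a4 a5 a6 a7 a8 g" by (rule SS_E)
  then have "SSw a2 a3 a4 a5 a6 a7 a8 g'" unfolding SSw_def using assms(2) by simp
  then show ?thesis by (rule SS_I)
qed

lemma SS_smul: "g \<in> SS \<Longrightarrow> a \<in> \<rat> \<Longrightarrow> (\<lambda>x y z. a * g x y z) \<in> SS"
  using SS_mulc[of g "\<lambda>_ _ _. a"] rat3 by auto
lemma SS_ymul: "g \<in> SS \<Longrightarrow> (\<lambda>x y z. y * g x y z) \<in> SS"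
  using SS_mulc[of g "\<lambda>_ y _. y"] vy by auto
lemma SS_zmul: "g \<in> SS \<Longrightarrow> (\<lambda>x y z. z * g x y z) \<in> SS"
  using SS_mulc[of g "\<lambda>_ _ z. z"] vz by auto




lemma slot2: "(\<lambda>x y z. x ^ m * (x / r3 x y z) + real m * x ^ (m - Suc 0) * r3 x y z) \<in> SS"
proof (rule SS_I[of "(\<lambda>x y z. x ^ m)" "(\<lambda>_ _ _. 0)" "(\<lambda>_ _ _. 0)" "(\<lambda>_ _ _. 0)" "(\<lambda>_ _ _. 0)" "(\<lambda>_ _ _. 0)" "(\<lambda>_ _ _. 0)"])
  have e: "(\<lambda>t. F3 (\<lambda>_ _ _. 0) (\<lambda>x y z. x ^ m) (\<lambda>_ _ _. 0) (\<lambda>_ _ _. 0) (\<lambda>_ _ _. 0) (\<lambda>_ _ _. 0) (\<lambda>_ _ _. 0) (\<lambda>_ _ _. 0) t y z) = (\<lambda>t. t ^ m * r3 t y z)" for y z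
    by (simp add: F3_def)
  show "SSw (\<lambda>x y z. x ^ m) (\<lambda>_ _ _. 0) (\<lambda>_ _ _. 0) (\<lambda>_ _ _. 0) (\<lambda>_ _ _. 0) (\<lambda>_ _ _. 0) (\<lambda>_ _ _. 0) (\<lambda>x y z. x ^ m * (x / r3 x y z) + real m * x ^ (m - Suc 0) * r3 x y z)"
    unfolding SSw_def e
  proof (intro conjI allI impI pow3 zero3)
    fix x y z :: real assume "x \<noteq> 0" "y \<noteq> 0" "z \<noteq> 0"
    show "((\<lambda>t. t ^ m * r3 t y z) has_real_derivative x ^ m * (x / r3 x y z) + real m * x ^ (m - Suc 0) * r3 x y z) (at x)"
      by (rule DERIV_mult'[OF DERIV_pow dR[OF \<open>y\<noteq>0\<close>]])
  qed
qed

lemma slot3: "(\<lambda>x y z. x ^ m * (1 / r3 x y z) + real m * x ^ (m - Suc 0) * artanh (x / r3 x y z)) \<in> SS"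
proof (rule SS_I[of "(\<lambda>_ _ _. 0)" "(\<lambda>x y z. x ^ m)" "(\<lambda>_ _ _. 0)" "(\<lambda>_ _ _. 0)" "(\<lambda>_ _ _. 0)" "(\<lambda>_ _ _. 0)" "(\<lambda>_ _ _. 0)"])
  have e: "(\<lambda>t. F3 (\<lambda>_ _ _. 0) (\<lambda>_ _ _. 0) (\<lambda>x y z. x ^ m) (\<lambda>_ _ _. 0) (\<lambda>_ _ _. 0) (\<lambda>_ _ _. 0) (\<lambda>_ _ _. 0) (\<lambda>_ _ _. 0) t y z) = (\<lambda>t. t ^ m * artanh (t / r3 t y z))" for y z
    by (simp add: F3_def)
  show "SSw (\<lambda>_ _ _. 0) (\<lambda>x y z. x ^ m) (\<lambda>_ _ _. 0) (\<lambda>_ _ _. 0) (\<lambda>_ _ _. 0) (\<lambda>_ _ _. 0) (\<lambda>_ _ _. 0) (\<lambda>x y z. x ^ m * (1 / r3 x y z) + real m * x ^ (m - Suc 0) * artanh (x / r3 x y z))"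
    unfolding SSw_def e
  proof (intro conjI allI impI pow3 zero3)
    fix x y z :: real assume "x \<noteq> 0" "y \<noteq> 0" "z \<noteq> 0"
    show "((\<lambda>t. t ^ m * artanh (t / r3 t y z)) has_real_derivative x ^ m * (1 / r3 x y z) + real m * x ^ (m - Suc 0) * artanh (x / r3 x y z)) (at x)"
      by (rule DERIV_mult'[OF DERIV_pow dA3[OF \<open>y\<noteq>0\<close>]])
  qed
qed

lemma slot4: "(\<lambda>x y z. x ^ m * (- (x*y) / (r3 x y z * (x^2+z^2))) + real m * x ^ (m - Suc 0) * artanh (y / r3 x y z)) \<in> SS"
proof (rule SS_I[of "(\<lambda>_ _ _. 0)" "(\<lambda>_ _ _. 0)" "(\<lambda>x y z. x ^ m)" "(\<lambda>_ _ _. 0)" "(\<lambda>_ _ _. 0)" "(\<lambda>_ _ _. 0)" "(\<lambda>_ _ _. 0)"])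
  have e: "(\<lambda>t. F3 (\<lambda>_ _ _. 0) (\<lambda>_ _ _. 0) (\<lambda>_ _ _. 0) (\<lambda>x y z. x ^ m) (\<lambda>_ _ _. 0) (\<lambda>_ _ _. 0) (\<lambda>_ _ _. 0) (\<lambda>_ _ _. 0) t y z) = (\<lambda>t. t ^ m * artanh (y / r3 t y z))" for y z
    by (simp add: F3_def)
  show "SSw (\<lambda>_ _ _. 0) (\<lambda>_ _ _. 0) (\<lambda>x y z. x ^ m) (\<lambda>_ _ _. 0) (\<lambda>_ _ _. 0) (\<lambda>_ _ _. 0) (\<lambda>_ _ _. 0) (\<lambda>x y z. x ^ m * (- (x*y) / (r3 x y z * (x^2+z^2))) + real m * x ^ (m - Suc 0) * artanh (y / r3 x y z))"
    unfolding SSw_def e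
  proof (intro conjI allI impI pow3 zero3)
    fix x y z :: real assume "x \<noteq> 0" "y \<noteq> 0" "z \<noteq> 0"
    show "((\<lambda>t. t ^ m * artanh (y / r3 t y z)) has_real_derivative x ^ m * (- (x*y) / (r3 x y z * (x^2+z^2))) + real m * x ^ (m - Suc 0) * artanh (y / r3 x y z)) (at x)"
      by (rule DERIV_mult'[OF DERIV_pow dA4[OF \<open>y\<noteq>0\<close> \<open>z\<noteq>0\<close>]])
  qed
qed

lemma slot5: "(\<lambda>x y z. x ^ m * (- (x*z) / (r3 x y z * (x^2+y^2))) + real m * x ^ (m - Suc 0) * artanh (z / r3 x y z)) \<in> SS"
proof (rule SS_I[of "(\<lambda>_ _ _. 0)" "(\<lambda>_ _ _. 0)" "(\<lambda>_ _ _. 0)" "(\<lambda>x y z. x ^ m)" "(\<lambda>_ _ _. 0)" "(\<lambda>_ _ _. 0)" "(\<lambda>_ _ _. 0)"])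
  have e: "(\<lambda>t. F3 (\<lambda>_ _ _. 0) (\<lambda>_ _ _. 0) (\<lambda>_ _ _. 0) (\<lambda>_ _ _. 0) (\<lambda>x y z. x ^ m) (\<lambda>_ _ _. 0) (\<lambda>_ _ _. 0) (\<lambda>_ _ _. 0) t y z) = (\<lambda>t. t ^ m * artanh (z / r3 t y z))" for y z
    by (simp add: F3_def)
  show "SSw (\<lambda>_ _ _. 0) (\<lambda>_ _ _. 0) (\<lambda>_ _ _. 0) (\<lambda>x y z. x ^ m) (\<lambda>_ _ _. 0) (\<lambda>_ _ _. 0) (\<lambda>_ _ _. 0) (\<lambda>x y z. x ^ m * (- (x*z) / (r3 x y z * (x^2+y^2))) + real m * x ^ (m - Suc 0) * artanh (z / r3 x y z))"
    unfolding SSw_def e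
  proof (intro conjI allI impI pow3 zero3)
    fix x y z :: real assume "x \<noteq> 0" "y \<noteq> 0" "z \<noteq> 0"
    show "((\<lambda>t. t ^ m * artanh (z / r3 t y z)) has_real_derivative x ^ m * (- (x*z) / (r3 x y z * (x^2+y^2))) + real m * x ^ (m - Suc 0) * artanh (z / r3 x y z)) (at x)"
      by (rule DERIV_mult'[OF DERIV_pow dA5[OF \<open>y\<noteq>0\<close> \<open>z\<noteq>0\<close>]])
  qed
qed

lemma slot6: "(\<lambda>x y z. x ^ m * ((y*z) / (r3 x y z * (x^2+z^2))) + real m * x ^ (m - Suc 0) * arctan (x / r3 x y z * (y / z))) \<in> SS"
proof (rule SS_I[of "(\<lambda>_ _ _. 0)" "(\<lambda>_ _ _. 0)" "(\<lambda>_ _ _. 0)" "(\<lambda>_ _ _. 0)" "(\<lambda>x y z. x ^ m)" "(\<lambda>_ _ _. 0)" "(\<lambda>_ _ _. 0)"])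
  have e: "(\<lambda>t. F3 (\<lambda>_ _ _. 0) (\<lambda>_ _ _. 0) (\<lambda>_ _ _. 0) (\<lambda>_ _ _. 0) (\<lambda>_ _ _. 0) (\<lambda>x y z. x ^ m) (\<lambda>_ _ _. 0) (\<lambda>_ _ _. 0) t y z) = (\<lambda>t. t ^ m * arctan (t / r3 t y z * (y / z)))" for y z
    by (simp add: F3_def)
  show "SSw (\<lambda>_ _ _. 0) (\<lambda>_ _ _. 0) (\<lambda>_ _ _. 0) (\<lambda>_ _ _. 0) (\<lambda>x y z. x ^ m) (\<lambda>_ _ _. 0) (\<lambda>_ _ _. 0) (\<lambda>x y z. x ^ m * ((y*z) / (r3 x y z * (x^2+z^2))) + real m * x ^ (m - Suc 0) * arctan (x / r3 x y z * (y / z)))"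
    unfolding SSw_def e
  proof (intro conjI allI impI pow3 zero3)
    fix x y z :: real assume "x \<noteq> 0" "y \<noteq> 0" "z \<noteq> 0"
    show "((\<lambda>t. t ^ m * arctan (t / r3 t y z * (y / z))) has_real_derivative x ^ m * ((y*z) / (r3 x y z * (x^2+z^2))) + real m * x ^ (m - Suc 0) * arctan (x / r3 x y z * (y / z))) (at x)"
      by (rule DERIV_mult'[OF DERIV_pow dT6[OF \<open>y\<noteq>0\<close> \<open>z\<noteq>0\<close>]])
  qed
qed

lemma slot7: "(\<lambda>x y z. x ^ m * ((y*z) / (r3 x y z * (x^2+y^2))) + real m * x ^ (m - Suc 0) * arctan (x / r3 x y z * (z / y))) \<in> SS"
proof (rule SS_I[of "(\<lambda>_ _ _. 0)" "(\<lambda>_ _ _. 0)" "(\<lambda>_ _ _. 0)" "(\<lambda>_ _ _. 0)" "(\<lambda>_ _ _. 0)" "(\<lambda>x y z. x ^ m)" "(\<lambda>_ _ _. 0)"])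
  have e: "(\<lambda>t. F3 (\<lambda>_ _ _. 0) (\<lambda>_ _ _. 0) (\<lambda>_ _ _. 0) (\<lambda>_ _ _. 0) (\<lambda>_ _ _. 0) (\<lambda>_ _ _. 0) (\<lambda>x y z. x ^ m) (\<lambda>_ _ _. 0) t y z) = (\<lambda>t. t ^ m * arctan (t / r3 t y z * (z / y)))" for y z
    by (simp add: F3_def)
  show "SSw (\<lambda>_ _ _. 0) (\<lambda>_ _ _. 0) (\<lambda>_ _ _. 0) (\<lambda>_ _ _. 0) (\<lambda>_ _ _. 0) (\<lambda>x y z. x ^ m) (\<lambda>_ _ _. 0) (\<lambda>x y z. x ^ m * ((y*z) / (r3 x y z * (x^2+y^2))) + real m * x ^ (m - Suc 0) * arctan (x / r3 x y z * (z / y)))"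
    unfolding SSw_def e
  proof (intro conjI allI impI pow3 zero3)
    fix x y z :: real assume "x \<noteq> 0" "y \<noteq> 0" "z \<noteq> 0"
    show "((\<lambda>t. t ^ m * arctan (t / r3 t y z * (z / y))) has_real_derivative x ^ m * ((y*z) / (r3 x y z * (x^2+y^2))) + real m * x ^ (m - Suc 0) * arctan (x / r3 x y z * (z / y))) (at x)"
      by (rule DERIV_mult'[OF DERIV_pow dT7[OF \<open>y\<noteq>0\<close> \<open>z\<noteq>0\<close>]])
  qed
qed

lemma slot8: "(\<lambda>x y z. x ^ m * (- (y*z) / (r3 x y z * (x^2+z^2)) - (y*z) / (r3 x y z * (x^2+y^2))) + real m * x ^ (m - Suc 0) * arctan (y / r3 x y z * (z / x))) \<in> SS"
proof (rule SS_I[of "(\<lambda>_ _ _. 0)" "(\<lambda>_ _ _. 0)" "(\<lambda>_ _ _. 0)" "(\<lambda>_ _ _. 0)" "(\<lambda>_ _ _. 0)" "(\<lambda>_ _ _. 0)" "(\<lambda>x y z. x ^ m)"])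
  have e: "(\<lambda>t. F3 (\<lambda>_ _ _. 0) (\<lambda>_ _ _. 0) (\<lambda>_ _ _. 0) (\<lambda>_ _ _. 0) (\<lambda>_ _ _. 0) (\<lambda>_ _ _. 0) (\<lambda>_ _ _. 0) (\<lambda>x y z. x ^ m) t y z) = (\<lambda>t. t ^ m * arctan (y / r3 t y z * (z / t)))" for y z
    by (simp add: F3_def)
  show "SSw (\<lambda>_ _ _. 0) (\<lambda>_ _ _. 0) (\<lambda>_ _ _. 0) (\<lambda>_ _ _. 0) (\<lambda>_ _ _. 0) (\<lambda>_ _ _. 0) (\<lambda>x y z. x ^ m) (\<lambda>x y z. x ^ m * (- (y*z) / (r3 x y z * (x^2+z^2)) - (y*z) / (r3 x y z * (x^2+y^2))) + real m * x ^ (m - Suc 0) * arctan (y / r3 x y z * (z / x)))"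
    unfolding SSw_def e
  proof (intro conjI allI impI pow3 zero3)
    fix x y z :: real assume "x \<noteq> 0" "y \<noteq> 0" "z \<noteq> 0"
    show "((\<lambda>t. t ^ m * arctan (y / r3 t y z * (z / t))) has_real_derivative x ^ m * (- (y*z) / (r3 x y z * (x^2+z^2)) - (y*z) / (r3 x y z * (x^2+y^2))) + real m * x ^ (m - Suc 0) * arctan (y / r3 x y z * (z / x))) (at x)"
      by (rule DERIV_mult'[OF DERIV_pow dT8[OF \<open>x\<noteq>0\<close> \<open>y\<noteq>0\<close> \<open>z\<noteq>0\<close>]])
  qed
qed




lemma SS_lin: "f \<in> SS \<Longrightarrow> g \<in> SS \<Longrightarrow> a \<in> \<rat> \<Longrightarrow> b \<in> \<rat> \<Longrightarrow> (\<lambda>x y z. a * f x y z + b * g x y z) \<in> SS"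
  by (intro SS_add SS_smul)

lemma algPA: fixes R x y z w N :: real assumes "R>0" "R^2 = x^2+y^2+z^2" "N>0"
 shows "x^2*w/R = 1 * ((1/N) * (x*w*(x/R) + (N-1)*w*R) + (-(N-1)/N) * (y*(y*(w/R)))) + (-(N-1)/N) * (z*(z*(w/R)))"
 using assms(1,3) apply (simp add: field_simps) using assms(2) by algebra

lemma PA: "(\<lambda>x y z. x^m / r3 x y z) \<in> SS"
proof (induction m rule: less_induct)
  case (less m)
  show ?case
  proof (cases m)
    case 0 then show ?thesis by (rule_tac SS_cong[OF slot3[of 0]]) simp
  next
    case (Suc k)
    show ?thesis
    proof (cases k)
      case 0 then show ?thesis using \<open>m = Suc k\<close> by (rule_tac SS_cong[OF slot2[of 0]]) simp
    next
      case (Suc n)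
      have m: "m = n + 2" using \<open>m = Suc k\<close> Suc by simp
      have I: "(\<lambda>x y z. x^n / r3 x y z) \<in> SS" using less m by simp
      have t1: "(\<lambda>x y z. (1 / real (n+2)) * (x ^ (n+1) * (x / r3 x y z) + real (n+1) * x ^ (n + 1 - Suc 0) * r3 x y z)
             + (- real (n+1) / real (n+2)) * (y * (y * (x^n / r3 x y z)))) \<in> SS"
        by (rule SS_lin[OF slot2 SS_ymul[OF SS_ymul[OF I]]]) auto
      have "(\<lambda>x y z. 1 * ((1 / real (n+2)) * (x ^ (n+1) * (x / r3 x y z) + real (n+1) * x ^ (n + 1 - Suc 0) * r3 x y z)
             + (- real (n+1) / real (n+2)) * (y * (y * (x^n / r3 x y z)))) + (- real (n+1) / real (n+2)) * (z * (z * (x^n / r3 x y z)))) \<in> SS"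
        by (rule SS_lin[OF t1 SS_zmul[OF SS_zmul[OF I]]]) auto
      then show ?thesis unfolding m
      proof (rule SS_cong)
        fix x y z :: real assume "x \<noteq> 0" "y \<noteq> 0" "z \<noteq> 0"
        have R: "r3 x y z > 0" "(r3 x y z)^2 = x^2+y^2+z^2" using r3_pos[OF \<open>y\<noteq>0\<close>] r3_sq by auto
        have e1: "x^(n+2) = x^2*x^n" "x^(n+1) = x*x^n" by (simp_all add: power_add power2_eq_square)
        have e3: "n + 1 - Suc 0 = n" by simp
        have e4: "real (n+1) = real (n+2) - 1" by simp
        have "real (n+2) > 0" by simp
        show "x ^ (n + 2) / r3 x y z = 1 * ((1 / real (n+2)) * (x ^ (n+1) * (x / r3 x y z) + real (n+1) * x ^ (n + 1 - Suc 0) * r3 x y z)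
             + (- real (n+1) / real (n+2)) * (y * (y * (x^n / r3 x y z)))) + (- real (n+1) / real (n+2)) * (z * (z * (x^n / r3 x y z)))"
          unfolding e1 e3 e4 by (rule algPA[OF R \<open>real (n+2) > 0\<close>])
      qed
    qed
  qed
qed

lemma SS_neg: "f \<in> SS \<Longrightarrow> (\<lambda>x y z. - f x y z) \<in> SS"
  using SS_smul[of f "-1"] by simp

lemma algPR: fixes R x y z w :: real assumes "R>0" "R^2 = x^2+y^2+z^2"
  shows "w * R = 1 * (1 * (x^2*w / R) + 1 * (y * (y * (w / R)))) + 1 * (z * (z * (w / R)))"
  using assms(1) apply (simp add: field_simps) using assms(2) by algebra

lemma algFS: fixes N w B E :: real assumes "N > 0"
  shows "w * B = (1 / N) * (E + N * w * B) + (- 1 / N) * E"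
  using assms by (simp add: field_simps)

lemma PR: "(\<lambda>x y z. x^m * r3 x y z) \<in> SS"
proof -
  have t1: "(\<lambda>x y z. 1 * (x^(m+2) / r3 x y z) + 1 * (y * (y * (x^m / r3 x y z)))) \<in> SS"
    by (rule SS_lin[OF PA SS_ymul[OF SS_ymul[OF PA]]]) auto
  have "(\<lambda>x y z. 1 * (1 * (x^(m+2) / r3 x y z) + 1 * (y * (y * (x^m / r3 x y z)))) + 1 * (z * (z * (x^m / r3 x y z)))) \<in> SS"
    by (rule SS_lin[OF t1 SS_zmul[OF SS_zmul[OF PA]]]) auto
  then show ?thesis
  proof (rule SS_cong)
    fix x y z :: real assume "x \<noteq> 0" "y \<noteq> 0" "z \<noteq> 0"
    have R: "r3 x y z > 0" "(r3 x y z)^2 = x^2+y^2+z^2" using r3_pos[OF \<open>y\<noteq>0\<close>] r3_sq by auto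
    have e1: "x^(m+2) = x^2*x^m" by (simp add: power_add power2_eq_square)
    show "x ^ m * r3 x y z = 1 * (1 * (x^(m+2) / r3 x y z) + 1 * (y * (y * (x^m / r3 x y z)))) + 1 * (z * (z * (x^m / r3 x y z)))"
      unfolding e1 by (rule algPR[OF R])
  qed
qed

lemma from_slot:
  assumes "(\<lambda>x y z. x^(k+1) * D x y z + real (k+1) * x^(k+1-Suc 0) * B x y z) \<in> SS"
    "(\<lambda>x y z. x^(k+1) * D x y z) \<in> SS"
  shows "(\<lambda>x y z. x^k * B x y z) \<in> SS"
proof -
  have "(\<lambda>x y z. (1 / real (k+1)) * (x^(k+1) * D x y z + real (k+1) * x^(k+1-Suc 0) * B x y z)
      + (- 1 / real (k+1)) * (x^(k+1) * D x y z)) \<in> SS"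
    by (rule SS_lin[OF assms]) auto
  then show ?thesis
  proof (rule SS_cong)
    fix x y z :: real
    have e: "k + 1 - Suc 0 = k" by simp
    show "x^k * B x y z = (1 / real (k+1)) * (x^(k+1) * D x y z + real (k+1) * x^(k+1-Suc 0) * B x y z)
      + (- 1 / real (k+1)) * (x^(k+1) * D x y z)" unfolding e by (rule algFS) simp
  qed
qed

lemma algH: fixes R x y z w P :: real assumes "R>0" "P>0" "P = x^2+z^2"
  shows "x^2*w*y/(R*P) = 1*(y*(w/R)) + (-1)*(z*(z*(w*y/(R*P))))"
  using assms(1,2) apply (simp add: field_simps) using assms(3) by algebra

lemma Hz0: "(\<lambda>x y z. z * (x^0 * y / (r3 x y z * (x^2+z^2)))) \<in> SS"
  by (rule SS_cong[OF slot6[of 0]]) simp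

lemma H: "m \<ge> 1 \<Longrightarrow> (\<lambda>x y z. x^m * y / (r3 x y z * (x^2+z^2))) \<in> SS"
proof (induction m rule: less_induct)
  case (less m)
  show ?case
  proof (cases "m = 1")
    case True then show ?thesis by (rule_tac SS_cong[OF SS_neg[OF slot4[of 0]]]) simp
  next
    case False
    define n where "n = m - 2"
    have m: "m = n + 2" using less.prems False unfolding n_def by simp
    have I: "(\<lambda>x y z. z * (x^n * y / (r3 x y z * (x^2+z^2)))) \<in> SS"
    proof (cases "n = 0")
      case True then show ?thesis using Hz0 by simp
    next
      case False
      have "n < m" "1 \<le> n" using m False by auto
      from less.IH[OF this] show ?thesis by (rule SS_zmul)
    qed
    have "(\<lambda>x y z. 1 * (y * (x^n / r3 x y z)) + (-1) * (z * (z * (x^n * y / (r3 x y z * (x^2+z^2)))))) \<in> SS"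
      by (rule SS_lin[OF SS_ymul[OF PA] SS_zmul[OF I]]) auto
    then show ?thesis unfolding m
    proof (rule SS_cong)
      fix x y z :: real assume "x \<noteq> 0" "y \<noteq> 0" "z \<noteq> 0"
      have R: "r3 x y z > 0" using r3_pos[OF \<open>y\<noteq>0\<close>] by auto
      have P: "x^2+z^2 > 0" using \<open>z\<noteq>0\<close> by (simp add: add_nonneg_pos)
      have e1: "x^(n+2) = x^2*x^n" by (simp add: power_add power2_eq_square)
      show "x^(n+2) * y / (r3 x y z * (x^2+z^2)) = 1 * (y * (x^n / r3 x y z)) + (-1) * (z * (z * (x^n * y / (r3 x y z * (x^2+z^2)))))"
        unfolding e1 by (rule algH[OF R P refl])
    qed
  qed
qed

lemma algG: fixes R x y z w P :: real assumes "R>0" "P>0" "P = x^2+y^2"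
  shows "x^2*w*z/(R*P) = 1*(z*(w/R)) + (-1)*(y*(y*(w*z/(R*P))))"
  using assms(1,2) apply (simp add: field_simps) using assms(3) by algebra

lemma Gy0: "(\<lambda>x y z. y * (x^0 * z / (r3 x y z * (x^2+y^2)))) \<in> SS"
  by (rule SS_cong[OF slot7[of 0]]) simp

lemma G: "m \<ge> 1 \<Longrightarrow> (\<lambda>x y z. x^m * z / (r3 x y z * (x^2+y^2))) \<in> SS"
proof (induction m rule: less_induct)
  case (less m)
  show ?case
  proof (cases "m = 1")
    case True then show ?thesis by (rule_tac SS_cong[OF SS_neg[OF slot5[of 0]]]) simp
  next
    case False
    define n where "n = m - 2"
    have m: "m = n + 2" using less.prems False unfolding n_def by simp
    have I: "(\<lambda>x y z. y * (x^n * z / (r3 x y z * (x^2+y^2)))) \<in> SS"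
    proof (cases "n = 0")
      case True then show ?thesis using Gy0 by simp
    next
      case False
      have "n < m" "1 \<le> n" using m False by auto
      from less.IH[OF this] show ?thesis by (rule SS_ymul)
    qed
    have "(\<lambda>x y z. 1 * (z * (x^n / r3 x y z)) + (-1) * (y * (y * (x^n * z / (r3 x y z * (x^2+y^2)))))) \<in> SS"
      by (rule SS_lin[OF SS_zmul[OF PA] SS_ymul[OF I]]) auto
    then show ?thesis unfolding m
    proof (rule SS_cong)
      fix x y z :: real assume "x \<noteq> 0" "y \<noteq> 0" "z \<noteq> 0"
      have R: "r3 x y z > 0" using r3_pos[OF \<open>y\<noteq>0\<close>] by auto
      have P: "x^2+y^2 > 0" using \<open>y\<noteq>0\<close> by (simp add: add_nonneg_pos)
      have e1: "x^(n+2) = x^2*x^n" by (simp add: power_add power2_eq_square)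
      show "x^(n+2) * z / (r3 x y z * (x^2+y^2)) = 1 * (z * (x^n / r3 x y z)) + (-1) * (y * (y * (x^n * z / (r3 x y z * (x^2+y^2)))))"
        unfolding e1 by (rule algG[OF R P refl])
    qed
  qed
qed

lemma PA3: "(\<lambda>x y z. x^k * artanh (x / r3 x y z)) \<in> SS"
  by (rule from_slot[OF slot3]) (rule SS_cong[OF PA[of "k+1"]], simp)

lemma PA4: "(\<lambda>x y z. x^k * artanh (y / r3 x y z)) \<in> SS"
  by (rule from_slot[OF slot4]) (rule SS_cong[OF SS_neg[OF H[of "k+2"]]], simp_all add: power_add)

lemma PA5: "(\<lambda>x y z. x^k * artanh (z / r3 x y z)) \<in> SS"
  by (rule from_slot[OF slot5]) (rule SS_cong[OF SS_neg[OF G[of "k+2"]]], simp_all add: power_add)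

lemma PT6: "(\<lambda>x y z. x^k * arctan (x / r3 x y z * (y / z))) \<in> SS"
  by (rule from_slot[OF slot6]) (rule SS_cong[OF SS_zmul[OF H[of "k+1"]]], simp_all)

lemma PT7: "(\<lambda>x y z. x^k * arctan (x / r3 x y z * (z / y))) \<in> SS"
  by (rule from_slot[OF slot7]) (rule SS_cong[OF SS_ymul[OF G[of "k+1"]]], simp_all)

lemma PT8: "(\<lambda>x y z. x^k * arctan (y / r3 x y z * (z / x))) \<in> SS"
proof (rule from_slot[OF slot8])
  have "(\<lambda>x y z. (-1) * (z * (x^(k+1) * y / (r3 x y z * (x^2+z^2)))) + (-1) * (y * (x^(k+1) * z / (r3 x y z * (x^2+y^2))))) \<in> SS"
    by (rule SS_lin[OF SS_zmul[OF H] SS_ymul[OF G]]) auto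
  then show "(\<lambda>x y z. x ^ (k + 1) * (- (y * z) / (r3 x y z * (x^2 + z^2)) - y * z / (r3 x y z * (x^2 + y^2)))) \<in> SS"
    by (rule SS_cong) (simp add: algebra_simps)
qed




lemma exhaust_6:
  fixes x :: 6
  shows "x = 1 \<or> x = 2 \<or> x = 3 \<or> x = 4 \<or> x = 5 \<or> x = 6"
proof (induct x)
  case (of_int z)
  then have "z = 0 \<or> z = 1 \<or> z = 2 \<or> z = 3 \<or> z = 4 \<or> z = 5" by fastforce
  then show ?case by auto
qed

lemma upd_nth: "upd p i t $ j = (if j = i then t else p $ j)"
  unfolding upd_def by simp
lemma upd_same: "upd p i (p $ i) = p"
  unfolding upd_def by (simp add: vec_eq_iff)

lemma qpoly_rat: "a \<in> \<rat> \<Longrightarrow> (\<lambda>_. a) \<in> qpoly" by (auto elim!: Rats_cases intro: qpoly_const)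
lemma qpoly_sub: "f \<in> qpoly \<Longrightarrow> g \<in> qpoly \<Longrightarrow> (\<lambda>p. f p - g p) \<in> qpoly"
proof -
  assume "f \<in> qpoly" "g \<in> qpoly"
  then have "(\<lambda>p. f p + (\<lambda>_. -1) p * g p) \<in> qpoly"
    by (intro qpoly_add qpoly_mult qpoly_rat) auto
  then show ?thesis by simp
qed
lemma Xc_qpoly: "Xc \<in> qpoly" unfolding Xc_def[abs_def] by (intro qpoly_sub qpoly_var)
lemma Yc_qpoly: "Yc \<in> qpoly" unfolding Yc_def[abs_def] by (intro qpoly_sub qpoly_var)
lemma Zc_qpoly: "Zc \<in> qpoly" unfolding Zc_def[abs_def] by (intro qpoly_sub qpoly_var)

lemma qp3_comp: "q \<in> qp3 \<Longrightarrow> f1 \<in> qpoly \<Longrightarrow> f2 \<in> qpoly \<Longrightarrow> f3 \<in> qpoly \<Longrightarrow> (\<lambda>p. q (f1 p) (f2 p) (f3 p)) \<in> qpoly"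
  by (induction q rule: qp3.induct) (auto intro: qpoly.intros)

lemma Rc_r3: "Rc p = r3 (Xc p) (Yc p) (Zc p)" unfolding Rc_def r3_def ..
lemma Rc_r3Y: "Rc p = r3 (Yc p) (Xc p) (Zc p)" unfolding Rc_def r3_def by (simp add: add_ac)
lemma Rc_r3Z: "Rc p = r3 (Zc p) (Yc p) (Xc p)" unfolding Rc_def r3_def by (simp add: add_ac)

definition Iw where
  "Iw i Q2 Q3 Q4 Q5 Q6 Q7 Q8 G \<longleftrightarrow> Q2 \<in> qpoly \<and> Q3 \<in> qpoly \<and> Q4 \<in> qpoly \<and> Q5 \<in> qpoly \<and> Q6 \<in> qpoly
      \<and> Q7 \<in> qpoly \<and> Q8 \<in> qpoly \<and> has_partial (FF (\<lambda>_. 0) Q2 Q3 Q4 Q5 Q6 Q7 Q8) i G U6"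

definition II :: "6 \<Rightarrow> (real^6 \<Rightarrow> real) set" where
  "II i = {G. \<exists>Q2 Q3 Q4 Q5 Q6 Q7 Q8. Iw i Q2 Q3 Q4 Q5 Q6 Q7 Q8 G}"

lemma II_I: "Iw i Q2 Q3 Q4 Q5 Q6 Q7 Q8 G \<Longrightarrow> G \<in> II i" unfolding II_def by (intro CollectI exI)
lemma II_E: "G \<in> II i \<Longrightarrow> (\<And>Q2 Q3 Q4 Q5 Q6 Q7 Q8. Iw i Q2 Q3 Q4 Q5 Q6 Q7 Q8 G \<Longrightarrow> P) \<Longrightarrow> P"
  unfolding II_def by auto

definition indep :: "6 \<Rightarrow> (real^6 \<Rightarrow> real) \<Rightarrow> bool" where
  "indep i c \<longleftrightarrow> (\<forall>p t. c (upd p i t) = c p)"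

lemma II_add: assumes "F \<in> II i" "G \<in> II i" shows "(\<lambda>p. F p + G p) \<in> II i"
proof -
  from assms(1) obtain a2 a3 a4 a5 a6 a7 a8 where A: "Iw i a2 a3 a4 a5 a6 a7 a8 F" by (rule II_E)
  from assms(2) obtain b2 b3 b4 b5 b6 b7 b8 where B: "Iw i b2 b3 b4 b5 b6 b7 b8 G" by (rule II_E)
  let ?s = "\<lambda>u v. (\<lambda>p. u p + v p) :: real^6\<Rightarrow>real"
  have e: "FF (\<lambda>_. 0) (?s a2 b2) (?s a3 b3) (?s a4 b4) (?s a5 b5) (?s a6 b6) (?s a7 b7) (?s a8 b8) q
     = FF (\<lambda>_. 0) a2 a3 a4 a5 a6 a7 a8 q + FF (\<lambda>_. 0) b2 b3 b4 b5 b6 b7 b8 q" for q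
    unfolding FF_def by (simp add: algebra_simps)
  have "Iw i (?s a2 b2) (?s a3 b3) (?s a4 b4) (?s a5 b5) (?s a6 b6) (?s a7 b7) (?s a8 b8) (\<lambda>p. F p + G p)"
    using A B unfolding Iw_def has_partial_def e by (auto intro!: qpoly_add DERIV_add)
  then show ?thesis by (rule II_I)
qed

lemma II_mulc: assumes "G \<in> II i" "c \<in> qpoly" "indep i c"
  shows "(\<lambda>p. c p * G p) \<in> II i"
proof -
  from assms(1) obtain a2 a3 a4 a5 a6 a7 a8 where A: "Iw i a2 a3 a4 a5 a6 a7 a8 G" by (rule II_E)
  let ?s = "\<lambda>u. (\<lambda>p. c p * u p) :: real^6\<Rightarrow>real"
  have e: "(\<lambda>t. FF (\<lambda>_. 0) (?s a2) (?s a3) (?s a4) (?s a5) (?s a6) (?s a7) (?s a8) (upd p i t))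
     = (\<lambda>t. c p * FF (\<lambda>_. 0) a2 a3 a4 a5 a6 a7 a8 (upd p i t))" for p
  proof (rule ext)
    fix t
    have "c (upd p i t) = c p" using assms(3) unfolding indep_def by blast
    then show "FF (\<lambda>_. 0) (?s a2) (?s a3) (?s a4) (?s a5) (?s a6) (?s a7) (?s a8) (upd p i t)
     = c p * FF (\<lambda>_. 0) a2 a3 a4 a5 a6 a7 a8 (upd p i t)" unfolding FF_def by (simp add: algebra_simps)
  qed
  have "Iw i (?s a2) (?s a3) (?s a4) (?s a5) (?s a6) (?s a7) (?s a8) (\<lambda>p. c p * G p)"
    using A assms(2) unfolding Iw_def has_partial_def
  proof (intro conjI ballI qpoly_mult; (elim conjE)?)
    fix p assume "p \<in> U6" and
      D: "\<forall>p\<in>U6. ((\<lambda>t. FF (\<lambda>_. 0) a2 a3 a4 a5 a6 a7 a8 (upd p i t)) has_real_derivative G p) (at (p $ i))"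
    show "((\<lambda>t. FF (\<lambda>_. 0) (?s a2) (?s a3) (?s a4) (?s a5) (?s a6) (?s a7) (?s a8) (upd p i t)) has_real_derivative c p * G p) (at (p $ i))"
      unfolding e[of p] using D \<open>p \<in> U6\<close> by (auto intro!: DERIV_cmult)
  qed auto
  then show ?thesis by (rule II_I)
qed

lemma indep_const: "indep i (\<lambda>_. a)" unfolding indep_def by simp
lemma indep_var: "j \<noteq> i \<Longrightarrow> indep i (\<lambda>p. p $ j)" unfolding indep_def by (simp add: upd_nth)

definition Rep where
  "Rep A B C q2 q3 q4 q5 q6 q7 q8 Q2 Q3 Q4 Q5 Q6 Q7 Q8 \<longleftrightarrow> Q2 \<in> qpoly \<and> Q3 \<in> qpoly \<and> Q4 \<in> qpoly \<and> Q5 \<in> qpoly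
     \<and> Q6 \<in> qpoly \<and> Q7 \<in> qpoly \<and> Q8 \<in> qpoly \<and>
     (\<forall>p. FF (\<lambda>_. 0) Q2 Q3 Q4 Q5 Q6 Q7 Q8 p = F3 (\<lambda>_ _ _. 0) q2 q3 q4 q5 q6 q7 q8 (A p) (B p) (C p))"

lemma lift:
  assumes g: "g \<in> SS"
  and perm: "\<And>q2 q3 q4 q5 q6 q7 q8. q2 \<in> qp3 \<Longrightarrow> q3 \<in> qp3 \<Longrightarrow> q4 \<in> qp3 \<Longrightarrow> q5 \<in> qp3 \<Longrightarrow> q6 \<in> qp3 \<Longrightarrow>
      q7 \<in> qp3 \<Longrightarrow> q8 \<in> qp3 \<Longrightarrow> \<exists>Q2 Q3 Q4 Q5 Q6 Q7 Q8. Rep A B C q2 q3 q4 q5 q6 q7 q8 Q2 Q3 Q4 Q5 Q6 Q7 Q8"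
  and lA: "\<And>p t. A (upd p i t) = \<sigma> * (t - p$i) + A p"
  and lB: "\<And>p t. B (upd p i t) = B p"
  and lC: "\<And>p t. C (upd p i t) = C p"
  and nz: "\<And>p. p \<in> U6 \<Longrightarrow> A p \<noteq> 0 \<and> B p \<noteq> 0 \<and> C p \<noteq> 0"
  shows "(\<lambda>p. \<sigma> * g (A p) (B p) (C p)) \<in> II i"
proof -
  from g obtain q2 q3 q4 q5 q6 q7 q8 where S: "SSw q2 q3 q4 q5 q6 q7 q8 g" by (rule SS_E)
  then have qs: "q2 \<in> qp3" "q3 \<in> qp3" "q4 \<in> qp3" "q5 \<in> qp3" "q6 \<in> qp3" "q7 \<in> qp3" "q8 \<in> qp3"
    and D: "\<And>x y z. x \<noteq> 0 \<Longrightarrow> y \<noteq> 0 \<Longrightarrow> z \<noteq> 0 \<Longrightarrow>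
        ((\<lambda>t. F3 (\<lambda>_ _ _. 0) q2 q3 q4 q5 q6 q7 q8 t y z) has_real_derivative g x y z) (at x)"
    unfolding SSw_def by auto
  from perm[OF qs] obtain Q2 Q3 Q4 Q5 Q6 Q7 Q8 where Rp: "Rep A B C q2 q3 q4 q5 q6 q7 q8 Q2 Q3 Q4 Q5 Q6 Q7 Q8"
    by blast
  then have Qs: "Q2 \<in> qpoly" "Q3 \<in> qpoly" "Q4 \<in> qpoly" "Q5 \<in> qpoly" "Q6 \<in> qpoly" "Q7 \<in> qpoly" "Q8 \<in> qpoly"
    and E: "\<And>p. FF (\<lambda>_. 0) Q2 Q3 Q4 Q5 Q6 Q7 Q8 p = F3 (\<lambda>_ _ _. 0) q2 q3 q4 q5 q6 q7 q8 (A p) (B p) (C p)"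
    unfolding Rep_def by auto
  have "has_partial (FF (\<lambda>_. 0) Q2 Q3 Q4 Q5 Q6 Q7 Q8) i (\<lambda>p. \<sigma> * g (A p) (B p) (C p)) U6"
    unfolding has_partial_def
  proof
    fix p assume "p \<in> U6"
    have e: "(\<lambda>t. FF (\<lambda>_. 0) Q2 Q3 Q4 Q5 Q6 Q7 Q8 (upd p i t))
      = (\<lambda>t. (\<lambda>u. F3 (\<lambda>_ _ _. 0) q2 q3 q4 q5 q6 q7 q8 u (B p) (C p)) ((\<lambda>t. \<sigma> * (t - p$i) + A p) t))"
      by (simp add: E lA lB lC)
    have d1: "((\<lambda>u. F3 (\<lambda>_ _ _. 0) q2 q3 q4 q5 q6 q7 q8 u (B p) (C p)) has_real_derivative g (A p) (B p) (C p))
       (at ((\<lambda>t. \<sigma> * (t - p$i) + A p) (p$i)))"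
      using D nz[OF \<open>p \<in> U6\<close>] by simp
    have d2: "((\<lambda>t. \<sigma> * (t - p$i) + A p) has_real_derivative \<sigma>) (at (p$i))"
      by (auto intro!: derivative_eq_intros)
    show "((\<lambda>t. FF (\<lambda>_. 0) Q2 Q3 Q4 Q5 Q6 Q7 Q8 (upd p i t)) has_real_derivative \<sigma> * g (A p) (B p) (C p)) (at (p $ i))"
      unfolding e using DERIV_chain2[OF d1 d2] by (simp add: mult.commute)
  qed
  then have "Iw i Q2 Q3 Q4 Q5 Q6 Q7 Q8 (\<lambda>p. \<sigma> * g (A p) (B p) (C p))" unfolding Iw_def using Qs by auto
  then show ?thesis by (rule II_I)
qed

lemma RepX: "q2 \<in> qp3 \<Longrightarrow> q3 \<in> qp3 \<Longrightarrow> q4 \<in> qp3 \<Longrightarrow> q5 \<in> qp3 \<Longrightarrow> q6 \<in> qp3 \<Longrightarrow>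
      q7 \<in> qp3 \<Longrightarrow> q8 \<in> qp3 \<Longrightarrow> \<exists>Q2 Q3 Q4 Q5 Q6 Q7 Q8. Rep Xc Yc Zc q2 q3 q4 q5 q6 q7 q8 Q2 Q3 Q4 Q5 Q6 Q7 Q8"
  apply (rule exI[of _ "\<lambda>p. q2 (Xc p) (Yc p) (Zc p)"], rule exI[of _ "\<lambda>p. q3 (Xc p) (Yc p) (Zc p)"],
         rule exI[of _ "\<lambda>p. q4 (Xc p) (Yc p) (Zc p)"], rule exI[of _ "\<lambda>p. q5 (Xc p) (Yc p) (Zc p)"],
         rule exI[of _ "\<lambda>p. q6 (Xc p) (Yc p) (Zc p)"], rule exI[of _ "\<lambda>p. q7 (Xc p) (Yc p) (Zc p)"],
         rule exI[of _ "\<lambda>p. q8 (Xc p) (Yc p) (Zc p)"])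
  unfolding Rep_def
  apply (intro conjI)
  apply (rule qp3_comp, assumption, rule Xc_qpoly, rule Yc_qpoly, rule Zc_qpoly)+
  unfolding FF_def F3_def Rc_r3 by simp

lemma comm3: "a / r * (b / c) = b / r * (a / (c::real))" by simp

lemma RepY: "q2 \<in> qp3 \<Longrightarrow> q3 \<in> qp3 \<Longrightarrow> q4 \<in> qp3 \<Longrightarrow> q5 \<in> qp3 \<Longrightarrow> q6 \<in> qp3 \<Longrightarrow>
      q7 \<in> qp3 \<Longrightarrow> q8 \<in> qp3 \<Longrightarrow> \<exists>Q2 Q3 Q4 Q5 Q6 Q7 Q8. Rep Yc Xc Zc q2 q3 q4 q5 q6 q7 q8 Q2 Q3 Q4 Q5 Q6 Q7 Q8"
  apply (rule exI[of _ "\<lambda>p. q2 (Yc p) (Xc p) (Zc p)"], rule exI[of _ "\<lambda>p. q4 (Yc p) (Xc p) (Zc p)"],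
         rule exI[of _ "\<lambda>p. q3 (Yc p) (Xc p) (Zc p)"], rule exI[of _ "\<lambda>p. q5 (Yc p) (Xc p) (Zc p)"],
         rule exI[of _ "\<lambda>p. q6 (Yc p) (Xc p) (Zc p)"], rule exI[of _ "\<lambda>p. q8 (Yc p) (Xc p) (Zc p)"],
         rule exI[of _ "\<lambda>p. q7 (Yc p) (Xc p) (Zc p)"])
  unfolding Rep_def
  apply (intro conjI)
  apply (rule qp3_comp, assumption, rule Yc_qpoly, rule Xc_qpoly, rule Zc_qpoly)+
  apply (rule allI)
  subgoal for p
    unfolding FF_def F3_def Rc_r3Y[symmetric]
    by (simp only: comm3[of "Yc p" "Rc p" "Xc p" "Zc p"] add_ac)
  done

lemma RepZ: "q2 \<in> qp3 \<Longrightarrow> q3 \<in> qp3 \<Longrightarrow> q4 \<in> qp3 \<Longrightarrow> q5 \<in> qp3 \<Longrightarrow> q6 \<in> qp3 \<Longrightarrow>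
      q7 \<in> qp3 \<Longrightarrow> q8 \<in> qp3 \<Longrightarrow> \<exists>Q2 Q3 Q4 Q5 Q6 Q7 Q8. Rep Zc Yc Xc q2 q3 q4 q5 q6 q7 q8 Q2 Q3 Q4 Q5 Q6 Q7 Q8"
  apply (rule exI[of _ "\<lambda>p. q2 (Zc p) (Yc p) (Xc p)"], rule exI[of _ "\<lambda>p. q5 (Zc p) (Yc p) (Xc p)"],
         rule exI[of _ "\<lambda>p. q4 (Zc p) (Yc p) (Xc p)"], rule exI[of _ "\<lambda>p. q3 (Zc p) (Yc p) (Xc p)"],
         rule exI[of _ "\<lambda>p. q8 (Zc p) (Yc p) (Xc p)"], rule exI[of _ "\<lambda>p. q7 (Zc p) (Yc p) (Xc p)"],
         rule exI[of _ "\<lambda>p. q6 (Zc p) (Yc p) (Xc p)"])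
  unfolding Rep_def
  apply (intro conjI)
  apply (rule qp3_comp, assumption, rule Zc_qpoly, rule Yc_qpoly, rule Xc_qpoly)+
  apply (rule allI)
  subgoal for p
    unfolding FF_def F3_def Rc_r3Z[symmetric]
    by (simp only: comm3[of "Zc p" "Rc p" "Yc p" "Xc p"] comm3[of "Zc p" "Rc p" "Xc p" "Yc p"]
        comm3[of "Yc p" "Rc p" "Xc p" "Zc p"] add_ac)
  done

lemma conj1_generic:
  assumes b1: "\<And>k. (\<lambda>p. V p ^ k * (1 / Rc p)) \<in> II i"
  and b2: "\<And>k. (\<lambda>p. V p ^ k * Rc p) \<in> II i"
  and b3: "\<And>k. (\<lambda>p. V p ^ k * artanh (Xc p / Rc p)) \<in> II i"
  and b4: "\<And>k. (\<lambda>p. V p ^ k * artanh (Yc p / Rc p)) \<in> II i"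
  and b5: "\<And>k. (\<lambda>p. V p ^ k * artanh (Zc p / Rc p)) \<in> II i"
  and b6: "\<And>k. (\<lambda>p. V p ^ k * arctan (Xc p / Rc p * (Yc p / Zc p))) \<in> II i"
  and b7: "\<And>k. (\<lambda>p. V p ^ k * arctan (Xc p / Rc p * (Zc p / Yc p))) \<in> II i"
  and b8: "\<And>k. (\<lambda>p. V p ^ k * arctan (Yc p / Rc p * (Zc p / Xc p))) \<in> II i"
  and dec: "\<And>p. p $ i = s * V p + w p" and s: "s \<in> \<rat>" and w: "w \<in> qpoly" "indep i w"
  and P: "P1 \<in> qpoly" "P2 \<in> qpoly" "P3 \<in> qpoly" "P4 \<in> qpoly" "P5 \<in> qpoly" "P6 \<in> qpoly" "P7 \<in> qpoly" "P8 \<in> qpoly"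
  shows "FF P1 P2 P3 P4 P5 P6 P7 P8 \<in> II i"
proof -
  define J where "J = {G. \<forall>k. (\<lambda>p. V p ^ k * G p) \<in> II i}"
  have Jmul: "P \<in> qpoly \<Longrightarrow> \<forall>G\<in>J. (\<lambda>p. P p * G p) \<in> J" for P
  proof (induction P rule: qpoly.induct)
    case (qpoly_const c)
    show ?case unfolding J_def
    proof (intro ballI CollectI allI)
      fix G k assume "G \<in> {G. \<forall>k. (\<lambda>p. V p ^ k * G p) \<in> II i}"
      then have "(\<lambda>p. V p ^ k * G p) \<in> II i" by simp
      from II_mulc[OF this qpoly.qpoly_const[of c] indep_const]
      show "(\<lambda>p. V p ^ k * (of_rat c * G p)) \<in> II i" by (simp add: algebra_simps)
    qed
  next
    case (qpoly_var j)
    show ?case unfolding J_def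
    proof (intro ballI CollectI allI)
      fix G k assume "G \<in> {G. \<forall>k. (\<lambda>p. V p ^ k * G p) \<in> II i}"
      then have G: "\<And>k. (\<lambda>p. V p ^ k * G p) \<in> II i" by simp
      show "(\<lambda>p. V p ^ k * (p $ j * G p)) \<in> II i"
      proof (cases "j = i")
        case True
        have "(\<lambda>p. s * (V p ^ Suc k * G p) + w p * (V p ^ k * G p)) \<in> II i"
          by (intro II_add II_mulc[OF G qpoly_rat[OF s] indep_const] II_mulc[OF G w])
        then show ?thesis using True dec by (simp add: algebra_simps)
      next
        case False
        from II_mulc[OF G qpoly.qpoly_var[of j] indep_var[OF False]]
        show ?thesis by (simp add: algebra_simps)
      qed
    qed
  next
    case (qpoly_add f g)
    show ?case
    proof
      fix G assume "G \<in> J"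
      then have "(\<lambda>p. f p * G p) \<in> J" "(\<lambda>p. g p * G p) \<in> J" using qpoly_add.IH by auto
      then show "(\<lambda>p. (f p + g p) * G p) \<in> J" unfolding J_def
        by (auto simp: algebra_simps intro!: II_add[where F="\<lambda>p. V p ^ k * (f p * G p)" and G="\<lambda>p. V p ^ k * (g p * G p)" for k, simplified])
    qed
  next
    case (qpoly_mult f g)
    show ?case
    proof
      fix G assume "G \<in> J"
      then have "(\<lambda>p. g p * G p) \<in> J" using qpoly_mult.IH by auto
      then have "(\<lambda>p. f p * (g p * G p)) \<in> J" using qpoly_mult.IH by auto
      then show "(\<lambda>p. f p * g p * G p) \<in> J" by (simp add: mult.assoc)
    qed
  qed
  have inJ: "b \<in> J \<Longrightarrow> Q \<in> qpoly \<Longrightarrow> (\<lambda>p. Q p * b p) \<in> II i" for b Q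
  proof -
    assume "b \<in> J" "Q \<in> qpoly"
    then have "(\<lambda>p. Q p * b p) \<in> J" using Jmul by blast
    then have "(\<lambda>p. V p ^ 0 * (Q p * b p)) \<in> II i" unfolding J_def by blast
    then show ?thesis by simp
  qed
  have J1: "(\<lambda>p. 1 / Rc p) \<in> J" "(\<lambda>p. Rc p) \<in> J" "(\<lambda>p. artanh (Xc p / Rc p)) \<in> J"
    "(\<lambda>p. artanh (Yc p / Rc p)) \<in> J" "(\<lambda>p. artanh (Zc p / Rc p)) \<in> J"
    "(\<lambda>p. arctan (Xc p / Rc p * (Yc p / Zc p))) \<in> J" "(\<lambda>p. arctan (Xc p / Rc p * (Zc p / Yc p))) \<in> J"
    "(\<lambda>p. arctan (Yc p / Rc p * (Zc p / Xc p))) \<in> J"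
    unfolding J_def using b1 b2 b3 b4 b5 b6 b7 b8 by auto
  show ?thesis unfolding FF_def[abs_def]
    by (intro II_add inJ[OF J1(1) P(1)] inJ[OF J1(2) P(2)] inJ[OF J1(3) P(3)] inJ[OF J1(4) P(4)]
          inJ[OF J1(5) P(5)] inJ[OF J1(6) P(6)] inJ[OF J1(7) P(7)] inJ[OF J1(8) P(8)])
qed




lemma liftS:
  assumes g: "g \<in> SS"
  and perm: "\<And>q2 q3 q4 q5 q6 q7 q8. q2 \<in> qp3 \<Longrightarrow> q3 \<in> qp3 \<Longrightarrow> q4 \<in> qp3 \<Longrightarrow> q5 \<in> qp3 \<Longrightarrow> q6 \<in> qp3 \<Longrightarrow>
      q7 \<in> qp3 \<Longrightarrow> q8 \<in> qp3 \<Longrightarrow> \<exists>Q2 Q3 Q4 Q5 Q6 Q7 Q8. Rep A B C q2 q3 q4 q5 q6 q7 q8 Q2 Q3 Q4 Q5 Q6 Q7 Q8"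
  and lA: "\<And>p t. A (upd p i t) = \<sigma> * (t - p$i) + A p"
  and lB: "\<And>p t. B (upd p i t) = B p"
  and lC: "\<And>p t. C (upd p i t) = C p"
  and nz: "\<And>p. p \<in> U6 \<Longrightarrow> A p \<noteq> 0 \<and> B p \<noteq> 0 \<and> C p \<noteq> 0"
  and sg: "\<sigma> = 1 \<or> \<sigma> = -1"
  shows "(\<lambda>p. g (A p) (B p) (C p)) \<in> II i"
proof -
  have "\<sigma> \<in> \<rat>" using sg by auto
  from II_mulc[OF lift[OF g perm lA lB lC nz] qpoly_rat[OF this] indep_const]
  have "(\<lambda>p. \<sigma> * (\<sigma> * g (A p) (B p) (C p))) \<in> II i" by blast
  moreover have "\<sigma> * \<sigma> = 1" using sg by auto
  ultimately show ?thesis by (simp add: mult.assoc[symmetric])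
qed

lemma nzX: "p \<in> U6 \<Longrightarrow> Xc p \<noteq> 0 \<and> Yc p \<noteq> 0 \<and> Zc p \<noteq> 0" unfolding U6_def by auto
lemma nzY: "p \<in> U6 \<Longrightarrow> Yc p \<noteq> 0 \<and> Xc p \<noteq> 0 \<and> Zc p \<noteq> 0" unfolding U6_def by auto
lemma nzZ: "p \<in> U6 \<Longrightarrow> Zc p \<noteq> 0 \<and> Yc p \<noteq> 0 \<and> Xc p \<noteq> 0" unfolding U6_def by auto

lemma axisX:
  assumes lA: "\<And>p t. Xc (upd p i t) = \<sigma> * (t - p$i) + Xc p"
  and lB: "\<And>p t. Yc (upd p i t) = Yc p" and lC: "\<And>p t. Zc (upd p i t) = Zc p"
  and sg: "\<sigma> = 1 \<or> \<sigma> = -1"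
  shows "(\<lambda>p. Xc p ^ k * (1 / Rc p)) \<in> II i"
  "(\<lambda>p. Xc p ^ k * Rc p) \<in> II i"
  "(\<lambda>p. Xc p ^ k * artanh (Xc p / Rc p)) \<in> II i"
  "(\<lambda>p. Xc p ^ k * artanh (Yc p / Rc p)) \<in> II i"
  "(\<lambda>p. Xc p ^ k * artanh (Zc p / Rc p)) \<in> II i"
  "(\<lambda>p. Xc p ^ k * arctan (Xc p / Rc p * (Yc p / Zc p))) \<in> II i"
  "(\<lambda>p. Xc p ^ k * arctan (Xc p / Rc p * (Zc p / Yc p))) \<in> II i"
  "(\<lambda>p. Xc p ^ k * arctan (Yc p / Rc p * (Zc p / Xc p))) \<in> II i"
  using liftS[OF PA RepX lA lB lC nzX sg] liftS[OF PR RepX lA lB lC nzX sg]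
    liftS[OF PA3 RepX lA lB lC nzX sg] liftS[OF PA4 RepX lA lB lC nzX sg] liftS[OF PA5 RepX lA lB lC nzX sg]
    liftS[OF PT6 RepX lA lB lC nzX sg] liftS[OF PT7 RepX lA lB lC nzX sg] liftS[OF PT8 RepX lA lB lC nzX sg]
  by (simp_all add: Rc_r3)

lemma axisY:
  assumes lA: "\<And>p t. Yc (upd p i t) = \<sigma> * (t - p$i) + Yc p"
  and lB: "\<And>p t. Xc (upd p i t) = Xc p" and lC: "\<And>p t. Zc (upd p i t) = Zc p"
  and sg: "\<sigma> = 1 \<or> \<sigma> = -1"
  shows "(\<lambda>p. Yc p ^ k * (1 / Rc p)) \<in> II i"
  "(\<lambda>p. Yc p ^ k * Rc p) \<in> II i"
  "(\<lambda>p. Yc p ^ k * artanh (Xc p / Rc p)) \<in> II i"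
  "(\<lambda>p. Yc p ^ k * artanh (Yc p / Rc p)) \<in> II i"
  "(\<lambda>p. Yc p ^ k * artanh (Zc p / Rc p)) \<in> II i"
  "(\<lambda>p. Yc p ^ k * arctan (Xc p / Rc p * (Yc p / Zc p))) \<in> II i"
  "(\<lambda>p. Yc p ^ k * arctan (Xc p / Rc p * (Zc p / Yc p))) \<in> II i"
  "(\<lambda>p. Yc p ^ k * arctan (Yc p / Rc p * (Zc p / Xc p))) \<in> II i"
  using liftS[OF PA RepY lA lB lC nzY sg] liftS[OF PR RepY lA lB lC nzY sg]
    liftS[OF PA4 RepY lA lB lC nzY sg] liftS[OF PA3 RepY lA lB lC nzY sg] liftS[OF PA5 RepY lA lB lC nzY sg]
    liftS[OF PT6 RepY lA lB lC nzY sg] liftS[OF PT8 RepY lA lB lC nzY sg] liftS[OF PT7 RepY lA lB lC nzY sg]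
  by (simp_all add: Rc_r3Y[symmetric] mult_ac)

lemma axisZ:
  assumes lA: "\<And>p t. Zc (upd p i t) = \<sigma> * (t - p$i) + Zc p"
  and lB: "\<And>p t. Yc (upd p i t) = Yc p" and lC: "\<And>p t. Xc (upd p i t) = Xc p"
  and sg: "\<sigma> = 1 \<or> \<sigma> = -1"
  shows "(\<lambda>p. Zc p ^ k * (1 / Rc p)) \<in> II i"
  "(\<lambda>p. Zc p ^ k * Rc p) \<in> II i"
  "(\<lambda>p. Zc p ^ k * artanh (Xc p / Rc p)) \<in> II i"
  "(\<lambda>p. Zc p ^ k * artanh (Yc p / Rc p)) \<in> II i"
  "(\<lambda>p. Zc p ^ k * artanh (Zc p / Rc p)) \<in> II i"
  "(\<lambda>p. Zc p ^ k * arctan (Xc p / Rc p * (Yc p / Zc p))) \<in> II i"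
  "(\<lambda>p. Zc p ^ k * arctan (Xc p / Rc p * (Zc p / Yc p))) \<in> II i"
  "(\<lambda>p. Zc p ^ k * arctan (Yc p / Rc p * (Zc p / Xc p))) \<in> II i"
  using liftS[OF PA RepZ lA lB lC nzZ sg] liftS[OF PR RepZ lA lB lC nzZ sg]
    liftS[OF PA5 RepZ lA lB lC nzZ sg] liftS[OF PA4 RepZ lA lB lC nzZ sg] liftS[OF PA3 RepZ lA lB lC nzZ sg]
    liftS[OF PT8 RepZ lA lB lC nzZ sg] liftS[OF PT7 RepZ lA lB lC nzZ sg] liftS[OF PT6 RepZ lA lB lC nzZ sg]
  by (simp_all add: Rc_r3Z[symmetric] mult_ac)

lemma conj1_1:
  assumes P: "P1 \<in> qpoly" "P2 \<in> qpoly" "P3 \<in> qpoly" "P4 \<in> qpoly" "P5 \<in> qpoly" "P6 \<in> qpoly" "P7 \<in> qpoly" "P8 \<in> qpoly"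
  shows "FF P1 P2 P3 P4 P5 P6 P7 P8 \<in> II 1"
proof -
  have lA: "\<And>p t. Xc (upd p 1 t) = (1) * (t - p$1) + Xc p"
    and lB: "\<And>p t. Yc (upd p 1 t) = Yc p" and lC: "\<And>p t. Zc (upd p 1 t) = Zc p"
    by (simp_all add: Xc_def Yc_def Zc_def upd_nth)
  have sg: "(1::real) = 1 \<or> (1::real) = -1" by simp
  note ax = axisX[OF lA lB lC sg]
  show ?thesis
    by (rule conj1_generic[where V=Xc and s="1" and w="\<lambda>p. p $4", OF ax(1) ax(2) ax(3) ax(4) ax(5) ax(6) ax(7) ax(8) _ _ qpoly_var indep_var P])
       (simp_all add: Xc_def Yc_def Zc_def)
qed

lemma conj1_4:
  assumes P: "P1 \<in> qpoly" "P2 \<in> qpoly" "P3 \<in> qpoly" "P4 \<in> qpoly" "P5 \<in> qpoly" "P6 \<in> qpoly" "P7 \<in> qpoly" "P8 \<in> qpoly"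
  shows "FF P1 P2 P3 P4 P5 P6 P7 P8 \<in> II 4"
proof -
  have lA: "\<And>p t. Xc (upd p 4 t) = (-1) * (t - p$4) + Xc p"
    and lB: "\<And>p t. Yc (upd p 4 t) = Yc p" and lC: "\<And>p t. Zc (upd p 4 t) = Zc p"
    by (simp_all add: Xc_def Yc_def Zc_def upd_nth)
  have sg: "(-1::real) = 1 \<or> (-1::real) = -1" by simp
  note ax = axisX[OF lA lB lC sg]
  show ?thesis
    by (rule conj1_generic[where V=Xc and s="-1" and w="\<lambda>p. p $1", OF ax(1) ax(2) ax(3) ax(4) ax(5) ax(6) ax(7) ax(8) _ _ qpoly_var indep_var P])
       (simp_all add: Xc_def Yc_def Zc_def)
qed

lemma conj1_2:
  assumes P: "P1 \<in> qpoly" "P2 \<in> qpoly" "P3 \<in> qpoly" "P4 \<in> qpoly" "P5 \<in> qpoly" "P6 \<in> qpoly" "P7 \<in> qpoly" "P8 \<in> qpoly"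
  shows "FF P1 P2 P3 P4 P5 P6 P7 P8 \<in> II 2"
proof -
  have lA: "\<And>p t. Yc (upd p 2 t) = (1) * (t - p$2) + Yc p"
    and lB: "\<And>p t. Xc (upd p 2 t) = Xc p" and lC: "\<And>p t. Zc (upd p 2 t) = Zc p"
    by (simp_all add: Xc_def Yc_def Zc_def upd_nth)
  have sg: "(1::real) = 1 \<or> (1::real) = -1" by simp
  note ax = axisY[OF lA lB lC sg]
  show ?thesis
    by (rule conj1_generic[where V=Yc and s="1" and w="\<lambda>p. p $5", OF ax(1) ax(2) ax(3) ax(4) ax(5) ax(6) ax(7) ax(8) _ _ qpoly_var indep_var P])
       (simp_all add: Xc_def Yc_def Zc_def)
qed

lemma conj1_5:
  assumes P: "P1 \<in> qpoly" "P2 \<in> qpoly" "P3 \<in> qpoly" "P4 \<in> qpoly" "P5 \<in> qpoly" "P6 \<in> qpoly" "P7 \<in> qpoly" "P8 \<in> qpoly"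
  shows "FF P1 P2 P3 P4 P5 P6 P7 P8 \<in> II 5"
proof -
  have lA: "\<And>p t. Yc (upd p 5 t) = (-1) * (t - p$5) + Yc p"
    and lB: "\<And>p t. Xc (upd p 5 t) = Xc p" and lC: "\<And>p t. Zc (upd p 5 t) = Zc p"
    by (simp_all add: Xc_def Yc_def Zc_def upd_nth)
  have sg: "(-1::real) = 1 \<or> (-1::real) = -1" by simp
  note ax = axisY[OF lA lB lC sg]
  show ?thesis
    by (rule conj1_generic[where V=Yc and s="-1" and w="\<lambda>p. p $2", OF ax(1) ax(2) ax(3) ax(4) ax(5) ax(6) ax(7) ax(8) _ _ qpoly_var indep_var P])
       (simp_all add: Xc_def Yc_def Zc_def)
qed

lemma conj1_3:
  assumes P: "P1 \<in> qpoly" "P2 \<in> qpoly" "P3 \<in> qpoly" "P4 \<in> qpoly" "P5 \<in> qpoly" "P6 \<in> qpoly" "P7 \<in> qpoly" "P8 \<in> qpoly"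
  shows "FF P1 P2 P3 P4 P5 P6 P7 P8 \<in> II 3"
proof -
  have lA: "\<And>p t. Zc (upd p 3 t) = (1) * (t - p$3) + Zc p"
    and lB: "\<And>p t. Yc (upd p 3 t) = Yc p" and lC: "\<And>p t. Xc (upd p 3 t) = Xc p"
    by (simp_all add: Xc_def Yc_def Zc_def upd_nth)
  have sg: "(1::real) = 1 \<or> (1::real) = -1" by simp
  note ax = axisZ[OF lA lB lC sg]
  show ?thesis
    by (rule conj1_generic[where V=Zc and s="1" and w="\<lambda>p. p $6", OF ax(1) ax(2) ax(3) ax(4) ax(5) ax(6) ax(7) ax(8) _ _ qpoly_var indep_var P])
       (simp_all add: Xc_def Yc_def Zc_def)
qed

lemma conj1_6:
  assumes P: "P1 \<in> qpoly" "P2 \<in> qpoly" "P3 \<in> qpoly" "P4 \<in> qpoly" "P5 \<in> qpoly" "P6 \<in> qpoly" "P7 \<in> qpoly" "P8 \<in> qpoly"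
  shows "FF P1 P2 P3 P4 P5 P6 P7 P8 \<in> II 6"
proof -
  have lA: "\<And>p t. Zc (upd p 6 t) = (-1) * (t - p$6) + Zc p"
    and lB: "\<And>p t. Yc (upd p 6 t) = Yc p" and lC: "\<And>p t. Xc (upd p 6 t) = Xc p"
    by (simp_all add: Xc_def Yc_def Zc_def upd_nth)
  have sg: "(-1::real) = 1 \<or> (-1::real) = -1" by simp
  note ax = axisZ[OF lA lB lC sg]
  show ?thesis
    by (rule conj1_generic[where V=Zc and s="-1" and w="\<lambda>p. p $3", OF ax(1) ax(2) ax(3) ax(4) ax(5) ax(6) ax(7) ax(8) _ _ qpoly_var indep_var P])
       (simp_all add: Xc_def Yc_def Zc_def)
qed

lemma conj1:
  assumes P: "P1 \<in> qpoly" "P2 \<in> qpoly" "P3 \<in> qpoly" "P4 \<in> qpoly" "P5 \<in> qpoly" "P6 \<in> qpoly" "P7 \<in> qpoly" "P8 \<in> qpoly"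
  shows "FF P1 P2 P3 P4 P5 P6 P7 P8 \<in> II i"
  using exhaust_6[of i] conj1_1[OF P] conj1_2[OF P] conj1_3[OF P] conj1_4[OF P] conj1_5[OF P] conj1_6[OF P]
  by auto




lemma qpoly_pow: "f \<in> qpoly \<Longrightarrow> (\<lambda>p. f p ^ n) \<in> qpoly"
proof (induction n)
  case 0 then show ?case using qpoly_const[of 1] by simp
next
  case (Suc n) then show ?case using qpoly_mult[OF Suc.prems Suc.IH] by simp
qed

lemma Iw_D: "Iw i Q2 Q3 Q4 Q5 Q6 Q7 Q8 G \<Longrightarrow> Q2 \<in> qpoly \<and> Q3 \<in> qpoly \<and> Q4 \<in> qpoly \<and> Q5 \<in> qpoly \<and> Q6 \<in> qpoly
      \<and> Q7 \<in> qpoly \<and> Q8 \<in> qpoly"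
  "Iw i Q2 Q3 Q4 Q5 Q6 Q7 Q8 G \<Longrightarrow> has_partial (FF (\<lambda>_. 0) Q2 Q3 Q4 Q5 Q6 Q7 Q8) i G U6"
  unfolding Iw_def by auto

lemma zero_qpoly: "(\<lambda>_. 0) \<in> qpoly" using qpoly_const[of 0] by simp

theorem mainTheorem5:
  fixes P1 P2 P3 P4 P5 P6 P7 P8 :: "real^6 \<Rightarrow> real" and i :: 6
  assumes "P1 \<in> qpoly" "P2 \<in> qpoly" "P3 \<in> qpoly" "P4 \<in> qpoly"
    "P5 \<in> qpoly" "P6 \<in> qpoly" "P7 \<in> qpoly" "P8 \<in> qpoly"
  shows "(\<exists>Q1 Q2 Q3 Q4 Q5 Q6 Q7 Q8.
            Q1 = (\<lambda>_. 0) \<and> Q2 \<in> qpoly \<and> Q3 \<in> qpoly \<and> Q4 \<in> qpoly \<and> Q5 \<in> qpoly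
            \<and> Q6 \<in> qpoly \<and> Q7 \<in> qpoly \<and> Q8 \<in> qpoly
            \<and> has_partial (FF Q1 Q2 Q3 Q4 Q5 Q6 Q7 Q8) i (FF P1 P2 P3 P4 P5 P6 P7 P8) U6)
       \<and> (\<forall>l1 l2 l3 m1 m2 m3 :: nat.
            \<exists>Q1 Q2 Q3 Q4 Q5 Q6 Q7 Q8. \<exists>G :: nat \<Rightarrow> real^6 \<Rightarrow> real.
              Q1 \<in> qpoly \<and> Q2 \<in> qpoly \<and> Q3 \<in> qpoly \<and> Q4 \<in> qpoly \<and> Q5 \<in> qpoly
              \<and> Q6 \<in> qpoly \<and> Q7 \<in> qpoly \<and> Q8 \<in> qpoly
              \<and> G 0 = FF Q1 Q2 Q3 Q4 Q5 Q6 Q7 Q8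
              \<and> G 6 = (\<lambda>p. p$1 ^ l1 * p$2 ^ l2 * p$3 ^ l3 * p$4 ^ m1 * p$5 ^ m2 * p$6 ^ m3 / Rc p)
              \<and> (\<forall>k<6. has_partial (G k) ([3, 2, 1, 6, 5, 4] ! k) (G (Suc k)) U6))"
proof (rule conjI)
  obtain Q2 Q3 Q4 Q5 Q6 Q7 Q8 where H: "Iw i Q2 Q3 Q4 Q5 Q6 Q7 Q8 (FF P1 P2 P3 P4 P5 P6 P7 P8)"
    using conj1[OF assms] by (rule II_E)
  show "\<exists>Q1 Q2 Q3 Q4 Q5 Q6 Q7 Q8.
            Q1 = (\<lambda>_. 0) \<and> Q2 \<in> qpoly \<and> Q3 \<in> qpoly \<and> Q4 \<in> qpoly \<and> Q5 \<in> qpoly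
            \<and> Q6 \<in> qpoly \<and> Q7 \<in> qpoly \<and> Q8 \<in> qpoly
            \<and> has_partial (FF Q1 Q2 Q3 Q4 Q5 Q6 Q7 Q8) i (FF P1 P2 P3 P4 P5 P6 P7 P8) U6"
    apply (rule exI[of _ "\<lambda>_. 0"], rule exI[of _ Q2], rule exI[of _ Q3], rule exI[of _ Q4], rule exI[of _ Q5],
           rule exI[of _ Q6], rule exI[of _ Q7], rule exI[of _ Q8])
    using Iw_D[OF H] by auto
next
  show "\<forall>l1 l2 l3 m1 m2 m3 :: nat.
            \<exists>Q1 Q2 Q3 Q4 Q5 Q6 Q7 Q8. \<exists>G :: nat \<Rightarrow> real^6 \<Rightarrow> real.
              Q1 \<in> qpoly \<and> Q2 \<in> qpoly \<and> Q3 \<in> qpoly \<and> Q4 \<in> qpoly \<and> Q5 \<in> qpoly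
              \<and> Q6 \<in> qpoly \<and> Q7 \<in> qpoly \<and> Q8 \<in> qpoly
              \<and> G 0 = FF Q1 Q2 Q3 Q4 Q5 Q6 Q7 Q8
              \<and> G 6 = (\<lambda>p. p$1 ^ l1 * p$2 ^ l2 * p$3 ^ l3 * p$4 ^ m1 * p$5 ^ m2 * p$6 ^ m3 / Rc p)
              \<and> (\<forall>k<6. has_partial (G k) ([3, 2, 1, 6, 5, 4] ! k) (G (Suc k)) U6)"
  proof (intro allI)
    fix l1 l2 l3 m1 m2 m3 :: nat
    define M where "M = (\<lambda>p::real^6. p$1 ^ l1 * p$2 ^ l2 * p$3 ^ l3 * p$4 ^ m1 * p$5 ^ m2 * p$6 ^ m3)"
    have M: "M \<in> qpoly" unfolding M_def
      by (intro qpoly_mult qpoly_pow qpoly_var)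
    note z = zero_qpoly
    obtain A2 A3 A4 A5 A6 A7 A8 where HA: "Iw 4 A2 A3 A4 A5 A6 A7 A8 (FF M (\<lambda>_. 0) (\<lambda>_. 0) (\<lambda>_. 0) (\<lambda>_. 0) (\<lambda>_. 0) (\<lambda>_. 0) (\<lambda>_. 0))"
      using conj1[OF M z z z z z z z] by (rule II_E)
    note A = Iw_D(1)[OF HA, THEN conjunct1] Iw_D(1)[OF HA, THEN conjunct2]
    have qA: "A2 \<in> qpoly" "A3 \<in> qpoly" "A4 \<in> qpoly" "A5 \<in> qpoly" "A6 \<in> qpoly" "A7 \<in> qpoly" "A8 \<in> qpoly"
      using Iw_D(1)[OF HA] by auto
    obtain B2 B3 B4 B5 B6 B7 B8 where HB: "Iw 5 B2 B3 B4 B5 B6 B7 B8 (FF (\<lambda>_. 0) A2 A3 A4 A5 A6 A7 A8)"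
      using conj1[OF z qA] by (rule II_E)
    have qB: "B2 \<in> qpoly" "B3 \<in> qpoly" "B4 \<in> qpoly" "B5 \<in> qpoly" "B6 \<in> qpoly" "B7 \<in> qpoly" "B8 \<in> qpoly"
      using Iw_D(1)[OF HB] by auto
    obtain C2 C3 C4 C5 C6 C7 C8 where HC: "Iw 6 C2 C3 C4 C5 C6 C7 C8 (FF (\<lambda>_. 0) B2 B3 B4 B5 B6 B7 B8)"
      using conj1[OF z qB] by (rule II_E)
    have qC: "C2 \<in> qpoly" "C3 \<in> qpoly" "C4 \<in> qpoly" "C5 \<in> qpoly" "C6 \<in> qpoly" "C7 \<in> qpoly" "C8 \<in> qpoly"
      using Iw_D(1)[OF HC] by auto
    obtain D2 D3 D4 D5 D6 D7 D8 where HD: "Iw 1 D2 D3 D4 D5 D6 D7 D8 (FF (\<lambda>_. 0) C2 C3 C4 C5 C6 C7 C8)"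
      using conj1[OF z qC] by (rule II_E)
    have qD: "D2 \<in> qpoly" "D3 \<in> qpoly" "D4 \<in> qpoly" "D5 \<in> qpoly" "D6 \<in> qpoly" "D7 \<in> qpoly" "D8 \<in> qpoly"
      using Iw_D(1)[OF HD] by auto
    obtain E2 E3 E4 E5 E6 E7 E8 where HE: "Iw 2 E2 E3 E4 E5 E6 E7 E8 (FF (\<lambda>_. 0) D2 D3 D4 D5 D6 D7 D8)"
      using conj1[OF z qD] by (rule II_E)
    have qE: "E2 \<in> qpoly" "E3 \<in> qpoly" "E4 \<in> qpoly" "E5 \<in> qpoly" "E6 \<in> qpoly" "E7 \<in> qpoly" "E8 \<in> qpoly"
      using Iw_D(1)[OF HE] by auto
    obtain F2 F3 F4 F5 F6 F7 F8 where HF: "Iw 3 F2 F3 F4 F5 F6 F7 F8 (FF (\<lambda>_. 0) E2 E3 E4 E5 E6 E7 E8)"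
      using conj1[OF z qE] by (rule II_E)
    have qF: "F2 \<in> qpoly" "F3 \<in> qpoly" "F4 \<in> qpoly" "F5 \<in> qpoly" "F6 \<in> qpoly" "F7 \<in> qpoly" "F8 \<in> qpoly"
      using Iw_D(1)[OF HF] by auto
    define G6 where "G6 = (\<lambda>p::real^6. p$1 ^ l1 * p$2 ^ l2 * p$3 ^ l3 * p$4 ^ m1 * p$5 ^ m2 * p$6 ^ m3 / Rc p)"
    have G6: "FF M (\<lambda>_. 0) (\<lambda>_. 0) (\<lambda>_. 0) (\<lambda>_. 0) (\<lambda>_. 0) (\<lambda>_. 0) (\<lambda>_. 0) = G6"
      unfolding G6_def M_def by (rule ext) (simp add: FF_def)
    define G where "G = (\<lambda>k. [FF (\<lambda>_. 0) F2 F3 F4 F5 F6 F7 F8, FF (\<lambda>_. 0) E2 E3 E4 E5 E6 E7 E8,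
        FF (\<lambda>_. 0) D2 D3 D4 D5 D6 D7 D8, FF (\<lambda>_. 0) C2 C3 C4 C5 C6 C7 C8, FF (\<lambda>_. 0) B2 B3 B4 B5 B6 B7 B8,
        FF (\<lambda>_. 0) A2 A3 A4 A5 A6 A7 A8, G6] ! k)"
    have h: "\<forall>k<6. has_partial (G k) ([3, 2, 1, 6, 5, 4] ! k) (G (Suc k)) U6"
    proof (intro allI impI)
      fix k :: nat assume "k < 6"
      then have "k = 0 \<or> k = 1 \<or> k = 2 \<or> k = 3 \<or> k = 4 \<or> k = 5" by auto
      then show "has_partial (G k) ([3, 2, 1, 6, 5, 4] ! k) (G (Suc k)) U6"
        using Iw_D(2)[OF HA] Iw_D(2)[OF HB] Iw_D(2)[OF HC] Iw_D(2)[OF HD] Iw_D(2)[OF HE] Iw_D(2)[OF HF]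
        unfolding G_def G6 by (elim disjE) (simp_all add: numeral_eq_Suc)
    qed
    show "\<exists>Q1 Q2 Q3 Q4 Q5 Q6 Q7 Q8. \<exists>G :: nat \<Rightarrow> real^6 \<Rightarrow> real.
              Q1 \<in> qpoly \<and> Q2 \<in> qpoly \<and> Q3 \<in> qpoly \<and> Q4 \<in> qpoly \<and> Q5 \<in> qpoly
              \<and> Q6 \<in> qpoly \<and> Q7 \<in> qpoly \<and> Q8 \<in> qpoly
              \<and> G 0 = FF Q1 Q2 Q3 Q4 Q5 Q6 Q7 Q8
              \<and> G 6 = (\<lambda>p. p$1 ^ l1 * p$2 ^ l2 * p$3 ^ l3 * p$4 ^ m1 * p$5 ^ m2 * p$6 ^ m3 / Rc p)
              \<and> (\<forall>k<6. has_partial (G k) ([3, 2, 1, 6, 5, 4] ! k) (G (Suc k)) U6)"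
      apply (rule exI[of _ "\<lambda>_. 0"], rule exI[of _ F2], rule exI[of _ F3], rule exI[of _ F4], rule exI[of _ F5],
           rule exI[of _ F6], rule exI[of _ F7], rule exI[of _ F8], rule exI[of _ G])
      using z qF h unfolding G_def G6_def by (simp add: numeral_eq_Suc)
  qed
qed


end
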